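(* Let $T$ be a tree with at least two vertices. The following are equivalent. (1) $T$ is always solvable. (2) Either there are disjoint always solvable trees $T_1,T_2$ and vertices $u\in V(T_1)$, $w\in V(T_2)$ with $\mathcal{A}_{T_1}(u)=0$, $\mathcal{A}_{T_2}(w)=1$ such that $T=T_1uwT_2$; or there are pairwise disjoint always solvable trees $T_1,T_2,T_3$ and vertices $x\in V(T_1)$, $y\in V(T_2)$, $z\in V(T_3)$ with $\mathcal{A}_{T_1}(x)=\mathcal{A}_{T_2}(y)=\mathcal{A}_{T_3}(z)=1$ such that $T$ is obtained from the disjoint union $T_1\cup T_2\cup T_3$ by adding the edges $xy$ and $yz$. (3) Either there are disjoint always solvable trees $T_1,T_2$ and vertices $u\in V(T_1)$, $w\in V(T_2)$ with $\mathcal{A}_{T_1}(u)=0$, $\mathcal{A}_{T_2}(w)=1$ such that $T=T_1uwT_2$; or there are pairwise disjoint always solvable trees $T_1,T_2,T_3$ and vertices $a\in V(T_1)$, $b\in V(T_2)$ with $\mathcal{A}_{T_1}(a)=\mathcal{A}_{T_2}(b)=1$, such that, setting $X:=T_1abT_2$, there are vertices $y\in V(T_3)$ and $x\in V(X)$ with $\mathcal{A}_{T_3}(y)=1$, $\mathcal{A}_X(x)=-1$ and $T=T_3yxX$.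
   Context: For a finite simple graph $G$ with vertex set $\{v_1,\dots,v_n\}$, the closed adjacency matrix $N(G)$ is the $n\times n$ matrix over $\mathbb{Z}_2$ whose $(i,j)$ entry is $1$ iff $i=j$ or $v_i$ is adjacent to $v_j$. Vectors in $\mathbb{Z}_2^{V(G)}$ are called patterns/configurations; a pattern $\mathbf{p}$ solves a configuration $\mathbf{c}$ if $N(G)\mathbf{p}=\mathbf{c}$. The nullity is $\nu(G):=\dim\operatorname{Ker}(N(G))$; elements of $\operatorname{Ker}(N(G))$ are null patterns; $G$ is always solvable if $\nu(G)=0$. $\mathbf{1}$ is the all-ones configuration; it is solvable on every graph. A vertex $v$ is half-activated if $\boldsymbol{\ell}(v)=1$ for some null pattern $\boldsymbol{\ell}$; otherwise it is always-activated if $\mathbf{p}(v)=1$ for every $\mathbf{p}$ with $N(G)\mathbf{p}=\mathbf{1}$, and never-activated if $\mathbf{p}(v)=0$ for every such $\mathbf{p}$. The activation number $\mathcal{A}_G(v)$ is $1$, $0$, $-1$ if $v$ is always-activated, never-activated, half-activated respectively. For disjoint graphs $G_1,G_2$ and $u\in V(G_1)$, $w\in V(G_2)$, $G_1uwG_2$ denotes the graph obtained from the disjoint union $G_1\cup G_2$ by adding the edge $uw$. *)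

theory Defs
  imports Complex_Main "HOL-Library.Z2" "HOL-Library.Function_Algebras"
begin

type_synonym 'a graph = "'a set \<times> 'a set set"

definition verts :: "'a graph \<Rightarrow> 'a set" where "verts G = fst G"
definition edges :: "'a graph \<Rightarrow> 'a set set" where "edges G = snd G"

definition simple_graph :: "'a graph \<Rightarrow> bool" where
  "simple_graph G \<longleftrightarrow> finite (verts G) \<and>
     (\<forall>e\<in>edges G. \<exists>u v. u \<noteq> v \<and> u \<in> verts G \<and> v \<in> verts G \<and> e = {u, v})"

definition adj :: "'a graph \<Rightarrow> 'a \<Rightarrow> 'a \<Rightarrow> bool" where
  "adj G u v \<longleftrightarrow> u \<noteq> v \<and> {u, v} \<in> edges G"

definition connected_graph :: "'a graph \<Rightarrow> bool" where
  "connected_graph G \<longleftrightarrow> verts G \<noteq> {} \<and>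
     (\<forall>u\<in>verts G. \<forall>v\<in>verts G. (adj G)\<^sup>*\<^sup>* u v)"

definition is_cycle :: "'a graph \<Rightarrow> 'a list \<Rightarrow> bool" where
  "is_cycle G cs \<longleftrightarrow> length cs \<ge> 3 \<and> distinct cs \<and> set cs \<subseteq> verts G \<and>
     (\<forall>i < length cs - 1. adj G (cs ! i) (cs ! Suc i)) \<and> adj G (last cs) (hd cs)"

definition tree :: "'a graph \<Rightarrow> bool" where
  "tree G \<longleftrightarrow> simple_graph G \<and> connected_graph G \<and> \<not> (\<exists>cs. is_cycle G cs)"

text \<open>Closed neighbourhood and the action of the closed adjacency matrix N(G) over Z_2
  on patterns. Patterns are functions vertex \<Rightarrow> bit vanishing outside V(G).\<close>
definition closed_nbhd :: "'a graph \<Rightarrow> 'a \<Rightarrow> 'a set" where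
  "closed_nbhd G v = {u \<in> verts G. u = v \<or> adj G u v}"

definition Nmul :: "'a graph \<Rightarrow> ('a \<Rightarrow> bit) \<Rightarrow> ('a \<Rightarrow> bit)" where
  "Nmul G p = (\<lambda>v. if v \<in> verts G then (\<Sum>u\<in>closed_nbhd G v. p u) else 0)"

definition patterns :: "'a graph \<Rightarrow> ('a \<Rightarrow> bit) set" where
  "patterns G = {p. \<forall>x. x \<notin> verts G \<longrightarrow> p x = 0}"

definition ones :: "'a graph \<Rightarrow> ('a \<Rightarrow> bit)" where
  "ones G = (\<lambda>v. if v \<in> verts G then 1 else 0)"

definition null_patterns :: "'a graph \<Rightarrow> ('a \<Rightarrow> bit) set" where
  "null_patterns G = {p \<in> patterns G. Nmul G p = (\<lambda>_. 0)}"

definition nullity :: "'a graph \<Rightarrow> nat" where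
  "nullity G = Vector_Spaces.vector_space.dim (\<lambda>(c::bit) (f::'a \<Rightarrow> bit). (\<lambda>x. c * f x)) (null_patterns G)"

definition always_solvable :: "'a graph \<Rightarrow> bool" where
  "always_solvable G \<longleftrightarrow> nullity G = 0"

definition half_activated :: "'a graph \<Rightarrow> 'a \<Rightarrow> bool" where
  "half_activated G v \<longleftrightarrow> (\<exists>l\<in>null_patterns G. l v = 1)"

definition always_activated :: "'a graph \<Rightarrow> 'a \<Rightarrow> bool" where
  "always_activated G v \<longleftrightarrow> \<not> half_activated G v \<and>
     (\<forall>p\<in>patterns G. Nmul G p = ones G \<longrightarrow> p v = 1)"

definition never_activated :: "'a graph \<Rightarrow> 'a \<Rightarrow> bool" where
  "never_activated G v \<longleftrightarrow> \<not> half_activated G v \<and>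
     (\<forall>p\<in>patterns G. Nmul G p = ones G \<longrightarrow> p v = 0)"

text \<open>Activation number (meaningful for v \<in> V(G); every such vertex falls in exactly
  one of the three classes since the all-ones configuration is solvable).\<close>
definition activation :: "'a graph \<Rightarrow> 'a \<Rightarrow> int" where
  "activation G v = (if half_activated G v then -1
                     else if always_activated G v then 1
                     else if never_activated G v then 0 else undefined)"

definition edge_join :: "'a graph \<Rightarrow> 'a \<Rightarrow> 'a \<Rightarrow> 'a graph \<Rightarrow> 'a graph" where
  "edge_join G1 u w G2 = (verts G1 \<union> verts G2, edges G1 \<union> edges G2 \<union> {{u, w}})"

end

theory Submission
  imports Defs "HOL-Library.Transitive_Closure_Table"
begin


declare add_bit_eq_xor[simp del] mult_bit_eq_and[simp del]

lemma bit_add_self[simp]: "(x::bit) + x = 0"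
  by (cases x) simp_all

interpretation VS: vector_space "(\<lambda>(c::bit) (f::'a \<Rightarrow> bit). (\<lambda>x. c * f x))"
  by unfold_locales (simp_all add: plus_fun_def fun_eq_iff algebra_simps)

lemma finite_patterns: assumes f: "finite (verts G)" shows "finite (patterns G)"
proof -
  have i: "inj_on (\<lambda>p. {x. p x = 1}) (patterns G)"
  proof (rule inj_onI)
    fix p q assume "p \<in> patterns G" "q \<in> patterns G" "{x. p x = 1} = {x. q x = 1}"
    then have e: "(p x = 1) = (q x = 1)" for x
      by (auto simp: set_eq_iff)
    have "p x = q x" for x
      using e[of x] by (cases "p x"; cases "q x") simp_all
    then show "p = q" by (rule ext)
  qed
  have s: "(\<lambda>p. {x. p x = 1}) ` patterns G \<subseteq> Pow (verts G)"
    by (auto simp: patterns_def)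
  have "finite ((\<lambda>p. {x. p x = 1}) ` patterns G)"
    using s f by (simp add: finite_subset)
  then show ?thesis using i by (simp add: finite_image_iff)
qed


lemma nullity_0_iff: assumes f: "finite (verts G)" shows "nullity G = 0 \<longleftrightarrow> null_patterns G \<subseteq> {0}"
  unfolding nullity_def
proof
  assume d: "VS.dim (null_patterns G) = 0"
  obtain B where B: "B \<subseteq> null_patterns G" "VS.independent B" "null_patterns G \<subseteq> VS.span B" "card B = VS.dim (null_patterns G)"
    by (rule VS.basis_exists)
  have "null_patterns G \<subseteq> patterns G" unfolding null_patterns_def by auto
  then have "B \<subseteq> patterns G" using B(1) by (rule order_trans[rotated])
  then have fB: "finite B" using finite_patterns[OF f] by (rule finite_subset)
  have "card B = 0" using B(4) d by (simp only:)
  then have "B = {}" using fB by simp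
  then show "null_patterns G \<subseteq> {0}" using B(3) VS.span_empty by simp
next
  assume a: "null_patterns G \<subseteq> {0}"
  have "VS.span (null_patterns G) \<subseteq> VS.span {0}" using a by (rule VS.span_mono)
  also have "VS.span {0} = VS.span {}" by (rule VS.span_insert_0)
  finally have 1: "VS.span (null_patterns G) \<subseteq> VS.span {}" .
  have "VS.span {} \<subseteq> VS.span (null_patterns G)" by (rule VS.span_mono) simp
  with 1 have "VS.span (null_patterns G) = VS.span {}" by (rule subset_antisym)
  then have "VS.dim (null_patterns G) = VS.dim ({}::('a\<Rightarrow>bit) set)"
    by (rule VS.span_eq_dim)
  then show "VS.dim (null_patterns G) = 0" using VS.dim_eq_card_independent[OF VS.independent_empty] by simp
qed


lemma bit_mult_self[simp]: "(x::bit) * x = x"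
  by (cases x) simp_all

lemma bit_cases2: "(x::bit) = 0 \<or> x = 1" by (cases x) simp_all

definition inv_g :: "'a graph \<Rightarrow> bool" where
  "inv_g G \<longleftrightarrow> (\<forall>p\<in>patterns G. Nmul G p = (\<lambda>_. 0) \<longrightarrow> p = (\<lambda>_. 0))"

lemma always_solvable_iff: "finite (verts G) \<Longrightarrow> always_solvable G \<longleftrightarrow> inv_g G"
  unfolding always_solvable_def inv_g_def
  by (auto simp: nullity_0_iff null_patterns_def zero_fun_def)

definition ev :: "'a \<Rightarrow> 'a \<Rightarrow> bit" where "ev u = (\<lambda>x. if x = u then 1 else 0)"

lemma adj_sym: "adj G u v = adj G v u"
  unfolding adj_def by (auto simp: insert_commute)

lemma closed_nbhd_sub: "closed_nbhd G v \<subseteq> verts G"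
  unfolding closed_nbhd_def by auto

lemma Nmul_out: "v \<notin> verts G \<Longrightarrow> Nmul G p v = 0"
  unfolding Nmul_def by simp

lemma Nmul_in: "v \<in> verts G \<Longrightarrow> Nmul G p v = (\<Sum>u\<in>closed_nbhd G v. p u)"
  unfolding Nmul_def by simp

lemma closed_nbhd_mem: "x \<in> closed_nbhd G v \<Longrightarrow> x \<in> verts G"
  unfolding closed_nbhd_def by auto

lemma Nmul_cong: "(\<And>x. x \<in> verts G \<Longrightarrow> p x = q x) \<Longrightarrow> Nmul G p = Nmul G q"
  unfolding Nmul_def by (intro ext) (auto intro!: sum.cong dest: closed_nbhd_mem)

lemma Nmul_pat: "Nmul G p \<in> patterns G"
  unfolding patterns_def by (simp add: Nmul_out)

lemma Nmul_add: "Nmul G (\<lambda>x. p x + q x) v = Nmul G p v + Nmul G q v"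
  unfolding Nmul_def by (simp add: sum.distrib)

lemma Nmul_alt: assumes "finite (verts G)" "v \<in> verts G"
  shows "Nmul G p v = (\<Sum>u\<in>verts G. if u = v \<or> adj G u v then p u else 0)"
  using assms unfolding Nmul_def closed_nbhd_def by (simp add: sum.inter_filter)

lemma pat_add: "p \<in> patterns G \<Longrightarrow> q \<in> patterns G \<Longrightarrow> (\<lambda>x. p x + q x) \<in> patterns G"
  unfolding patterns_def by simp

lemma ones_pat: "ones G \<in> patterns G" unfolding patterns_def ones_def by simp
lemma ev_pat: "u \<in> verts G \<Longrightarrow> ev u \<in> patterns G" unfolding patterns_def ev_def by auto

lemma inv_eq: assumes "inv_g G" "p \<in> patterns G" "q \<in> patterns G" "Nmul G p = Nmul G q"
  shows "p = q"
proof -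
  have "Nmul G (\<lambda>x. p x + q x) = (\<lambda>_. 0)"
    using assms(4) by (simp add: Nmul_add fun_eq_iff)
  then have "(\<lambda>x. p x + q x) = (\<lambda>_. 0)"
    using assms(1-3) pat_add unfolding inv_g_def by blast
  then have "p x = q x" for x
    by (metis add_left_cancel bit_add_self)
  then show ?thesis by (rule ext)
qed

lemma inv_surj: assumes f: "finite (verts G)" and i: "inv_g G" and c: "c \<in> patterns G"
  shows "\<exists>p\<in>patterns G. Nmul G p = c"
proof -
  have "Nmul G ` patterns G = patterns G"
  proof (rule endo_inj_surj)
    show "finite (patterns G)" using f by (rule finite_patterns)
    show "Nmul G ` patterns G \<subseteq> patterns G" using Nmul_pat by blast
    show "inj_on (Nmul G) (patterns G)" using inv_eq[OF i] by (meson inj_onI)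
  qed
  then show ?thesis using c by (metis imageE)
qed

lemma sym_sum_zero:
  assumes "finite W" "\<And>u v. R u v = R v u" "\<And>u. \<not> R u u" "\<And>u v. f u v = f v u"
  shows "(\<Sum>v\<in>W. \<Sum>u\<in>W. if R u v then (f u v::bit) else 0) = 0"
  using assms(1)
proof (induction W rule: finite_induct)
  case empty
  then show ?case by simp
next
  case (insert x W)
  let ?g = "\<lambda>u v. if R u v then (f u v::bit) else 0"
  have "(\<Sum>v\<in>insert x W. \<Sum>u\<in>insert x W. ?g u v)
      = (\<Sum>u\<in>insert x W. ?g u x) + (\<Sum>v\<in>W. \<Sum>u\<in>insert x W. ?g u v)"
    using insert by (simp add: sum.insert)
  also have "\<dots> = (?g x x + (\<Sum>u\<in>W. ?g u x)) + (\<Sum>v\<in>W. ?g x v + (\<Sum>u\<in>W. ?g u v))"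
    using insert by (simp add: sum.insert)
  also have "\<dots> = (\<Sum>u\<in>W. ?g u x) + (\<Sum>v\<in>W. ?g x v) + (\<Sum>v\<in>W. \<Sum>u\<in>W. ?g u v)"
    using assms(3) by (simp add: sum.distrib algebra_simps)
  also have "(\<Sum>v\<in>W. ?g x v) = (\<Sum>u\<in>W. ?g u x)"
    using assms(2,4) by (intro sum.cong) auto
  finally show ?case using insert.IH by simp
qed

lemma pair_sym: assumes "finite (verts G)"
  shows "(\<Sum>v\<in>verts G. p v * Nmul G q v) = (\<Sum>v\<in>verts G. Nmul G p v * q v)"
proof -
  have "(\<Sum>v\<in>verts G. p v * Nmul G q v) = (\<Sum>v\<in>verts G. \<Sum>u\<in>verts G. if u = v \<or> adj G u v then p v * q u else 0)"
    using assms by (intro sum.cong) (auto simp: Nmul_alt sum_distrib_left intro!: sum.cong)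
  also have "\<dots> = (\<Sum>u\<in>verts G. \<Sum>v\<in>verts G. if u = v \<or> adj G u v then p v * q u else 0)"
    by (rule sum.swap)
  also have "\<dots> = (\<Sum>u\<in>verts G. Nmul G p u * q u)"
    using assms by (intro sum.cong) (auto simp: Nmul_alt sum_distrib_right adj_sym intro!: sum.cong)
  finally show ?thesis .
qed

lemma pair_diag: assumes "finite (verts G)"
  shows "(\<Sum>v\<in>verts G. p v * Nmul G p v) = (\<Sum>v\<in>verts G. p v)"
proof -
  have "(\<Sum>v\<in>verts G. p v * Nmul G p v) = (\<Sum>v\<in>verts G. \<Sum>u\<in>verts G. (if u = v then p v * p u else 0) + (if adj G u v then p v * p u else 0))"
    using assms by (intro sum.cong) (auto simp: Nmul_alt sum_distrib_left adj_def intro!: sum.cong)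
  also have "\<dots> = (\<Sum>v\<in>verts G. \<Sum>u\<in>verts G. (if u = v then p v * p u else 0)) + (\<Sum>v\<in>verts G. \<Sum>u\<in>verts G. (if adj G u v then p v * p u else 0))"
    by (simp add: sum.distrib)
  also have "(\<Sum>v\<in>verts G. \<Sum>u\<in>verts G. (if adj G u v then p v * p u else 0)) = 0"
    using assms by (intro sym_sum_zero) (auto simp: adj_sym adj_def mult.commute)
  also have "(\<Sum>v\<in>verts G. \<Sum>u\<in>verts G. (if u = v then p v * p u else 0)) = (\<Sum>v\<in>verts G. p v)"
    using assms by (intro sum.cong) (auto simp: if_distrib cong: if_cong)
  finally show ?thesis by simp
qed

lemma diag_lemma:
  assumes f: "finite (verts G)" and u: "u \<in> verts G"
    and s: "Nmul G s = ones G" and q: "Nmul G q = ev u"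
  shows "q u = s u"
proof -
  have "q u = (\<Sum>v\<in>verts G. q v * ev u v)"
    using f u by (simp add: ev_def if_distrib cong: if_cong)
  also have "\<dots> = (\<Sum>v\<in>verts G. q v * Nmul G q v)" using q by simp
  also have "\<dots> = (\<Sum>v\<in>verts G. q v)" using f by (rule pair_diag)
  also have "\<dots> = (\<Sum>v\<in>verts G. q v * Nmul G s v)" using s by (simp add: ones_def)
  also have "\<dots> = (\<Sum>v\<in>verts G. Nmul G q v * s v)" using f by (rule pair_sym)
  also have "\<dots> = (\<Sum>v\<in>verts G. ev u v * s v)" using q by simp
  also have "\<dots> = (\<Sum>v\<in>verts G. if v = u then s v else 0)" by (intro sum.cong) (auto simp: ev_def)
  also have "\<dots> = s u" using f u by simp
  finally show ?thesis .
qed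


lemma bit_add_eq0: "((a::bit) + b = 0) \<longleftrightarrow> a = b"
  by (cases a; cases b) simp_all

lemma bit_add_eq1: "((a::bit) + b = 1) \<longleftrightarrow> a \<noteq> b"
  by (cases a; cases b) simp_all

lemma not_half_cases: assumes "\<not> half_activated G v"
  shows "always_activated G v \<or> never_activated G v"
proof (rule ccontr)
  assume a: "\<not> (always_activated G v \<or> never_activated G v)"
  then obtain p where p: "p \<in> patterns G" "Nmul G p = ones G" "p v \<noteq> 1"
    using assms unfolding always_activated_def by blast
  obtain q where q: "q \<in> patterns G" "Nmul G q = ones G" "q v \<noteq> 0"
    using assms a unfolding never_activated_def by blast
  have "Nmul G (\<lambda>x. p x + q x) = (\<lambda>_. 0)"
    using p(2) q(2) by (simp add: Nmul_add fun_eq_iff)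
  then have "(\<lambda>x. p x + q x) \<in> null_patterns G"
    using pat_add[OF p(1) q(1)] unfolding null_patterns_def by blast
  moreover have "p v + q v = 1" using p(3) q(3) by (simp add: bit_add_eq1)
  ultimately have "half_activated G v" unfolding half_activated_def
    by (intro bexI[where x="\<lambda>x. p x + q x"]) simp_all
  then show False using assms by (rule notE[rotated])
qed

lemma act_m1_iff: "activation G v = -1 \<longleftrightarrow> half_activated G v"
proof
  assume "half_activated G v" then show "activation G v = -1" unfolding activation_def by simp
next
  assume a: "activation G v = -1"
  show "half_activated G v"
  proof (rule ccontr)
    assume n: "\<not> half_activated G v"
    then have "activation G v = 1 \<or> activation G v = 0"
      using not_half_cases[OF n] unfolding activation_def by auto
    with a show False by simp
  qed
qed

lemma act_inv: assumes i: "inv_g G" and s: "s \<in> patterns G" "Nmul G s = ones G"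
  shows "activation G v = (if s v = 1 then 1 else 0)"
proof -
  have nh: "\<not> half_activated G v"
  proof
    assume "half_activated G v"
    then obtain l where l: "l \<in> patterns G" "Nmul G l = (\<lambda>_. 0)" "l v = 1"
      unfolding half_activated_def null_patterns_def by blast
    then have "l = (\<lambda>_. 0)" using i unfolding inv_g_def by blast
    with l(3) show False by simp
  qed
  have all: "p = s" if "p \<in> patterns G" "Nmul G p = ones G" for p
    using inv_eq[OF i that(1) s(1)] that(2) s(2) by simp
  show ?thesis
  proof (cases "s v = 1")
    case True
    then have "always_activated G v" using nh all unfolding always_activated_def by blast
    then show ?thesis using nh True unfolding activation_def by simp
  next
    case False
    then have "never_activated G v"
      using nh all unfolding never_activated_def by (metis bit_not_one_iff)
    moreover have "\<not> always_activated G v"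
      using False s unfolding always_activated_def by blast
    ultimately show ?thesis using nh False unfolding activation_def by simp
  qed
qed

lemma Nmul_zero: "(\<And>x. x \<in> verts G \<Longrightarrow> p x = 0) \<Longrightarrow> Nmul G p = (\<lambda>_. 0)"
  unfolding Nmul_def by (intro ext) (auto intro!: sum.neutral dest: closed_nbhd_mem)

definition rs :: "'a set \<Rightarrow> ('a \<Rightarrow> bit) \<Rightarrow> 'a \<Rightarrow> bit" where
  "rs A p = (\<lambda>x. if x \<in> A then p x else 0)"

lemma rs_pat: "rs (verts H) p \<in> patterns H" unfolding rs_def patterns_def by simp
lemma Nmul_rs: "Nmul H (rs (verts H) p) = Nmul H p"
  by (rule Nmul_cong) (simp add: rs_def)

lemma inv_part_zero: assumes "inv_g H" "\<And>v. v \<in> verts H \<Longrightarrow> Nmul H l v = 0" "x \<in> verts H"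
  shows "l x = 0"
proof -
  have "Nmul H l v = 0" for v
    using assms(2)[of v] Nmul_out[of v H l] by blast
  then have "Nmul H (rs (verts H) l) = (\<lambda>_. 0)"
    by (simp add: Nmul_rs fun_eq_iff)
  then have "rs (verts H) l = (\<lambda>_. 0)" using assms(1) rs_pat unfolding inv_g_def by blast
  then have "rs (verts H) l x = 0" by simp
  then show ?thesis using assms(3) by (simp add: rs_def)
qed

lemma part_diag: assumes "finite (verts H)" "u \<in> verts H" "Nmul H s = ones H"
    "\<And>v. v \<in> verts H \<Longrightarrow> Nmul H l v = ev u v"
  shows "l u = s u"
proof -
  have "Nmul H l v = ev u v" for v
  proof (cases "v \<in> verts H")
    case True then show ?thesis using assms(4) by blast
  next
    case False then show ?thesis using assms(2) Nmul_out[of v H l] by (auto simp: ev_def)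
  qed
  then have "Nmul H (rs (verts H) l) = ev u"
    by (simp add: Nmul_rs fun_eq_iff)
  then have "rs (verts H) l u = s u" using diag_lemma[OF assms(1,2,3)] by blast
  then show ?thesis using assms(2) by (simp add: rs_def)
qed

definition J :: "'a graph \<Rightarrow> 'a \<Rightarrow> 'a \<Rightarrow> 'a graph \<Rightarrow> bool" where
  "J G1 u w G2 \<longleftrightarrow> simple_graph G1 \<and> simple_graph G2 \<and> verts G1 \<inter> verts G2 = {} \<and>
     u \<in> verts G1 \<and> w \<in> verts G2"

lemma ej_sym: "edge_join G1 u w G2 = edge_join G2 w u G1"
  unfolding edge_join_def by (auto simp: insert_commute)

lemma J_sym: "J G1 u w G2 \<Longrightarrow> J G2 w u G1"
  unfolding J_def by auto

lemma verts_ej[simp]: "verts (edge_join G1 u w G2) = verts G1 \<union> verts G2"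
  unfolding edge_join_def verts_def by simp
lemma edges_ej[simp]: "edges (edge_join G1 u w G2) = edges G1 \<union> edges G2 \<union> {{u, w}}"
  unfolding edge_join_def edges_def by simp

lemma simple_edge: "simple_graph G \<Longrightarrow> {x, v} \<in> edges G \<Longrightarrow> x \<in> verts G \<and> v \<in> verts G"
  unfolding simple_graph_def by (metis doubleton_eq_iff insert_iff)

lemma ej_simple: assumes j: "J G1 u w G2" shows "simple_graph (edge_join G1 u w G2)"
proof -
  have s1: "simple_graph G1" and s2: "simple_graph G2" and d: "verts G1 \<inter> verts G2 = {}"
    and u: "u \<in> verts G1" and w: "w \<in> verts G2" using j unfolding J_def by auto
  have "\<exists>a b. a \<noteq> b \<and> a \<in> verts G1 \<union> verts G2 \<and> b \<in> verts G1 \<union> verts G2 \<and> e = {a, b}"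
    if e: "e \<in> edges (edge_join G1 u w G2)" for e
  proof -
    consider "e \<in> edges G1" | "e \<in> edges G2" | "e = {u, w}" using e by auto
    then show ?thesis
    proof cases
      case 1
      then obtain a b where "a \<noteq> b" "a \<in> verts G1" "b \<in> verts G1" "e = {a, b}"
        using s1 unfolding simple_graph_def by blast
      then show ?thesis by blast
    next
      case 2
      then obtain a b where "a \<noteq> b" "a \<in> verts G2" "b \<in> verts G2" "e = {a, b}"
        using s2 unfolding simple_graph_def by blast
      then show ?thesis by blast
    next
      case 3
      have "u \<noteq> w" using d u w by auto
      then show ?thesis using 3 u w by blast
    qed
  qed
  moreover have "finite (verts G1 \<union> verts G2)" using s1 s2 unfolding simple_graph_def by simp
  ultimately show ?thesis unfolding simple_graph_def by simp
qed

lemma ej_nbhd1: assumes j: "J G1 u w G2" and v: "v \<in> verts G1"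
  shows "closed_nbhd (edge_join G1 u w G2) v = closed_nbhd G1 v \<union> (if v = u then {w} else {})"
proof -
  have s1: "simple_graph G1" and s2: "simple_graph G2" and d: "verts G1 \<inter> verts G2 = {}"
    and u: "u \<in> verts G1" and w: "w \<in> verts G2" using j unfolding J_def by auto
  have vw: "v \<noteq> w" using d v w by auto
  show ?thesis
  proof (intro set_eqI iffI)
    fix x assume x: "x \<in> closed_nbhd (edge_join G1 u w G2) v"
    show "x \<in> closed_nbhd G1 v \<union> (if v = u then {w} else {})"
    proof (cases "x = v")
      case True then show ?thesis using v unfolding closed_nbhd_def by auto
    next
      case False
      then have e: "{x, v} \<in> edges G1 \<union> edges G2 \<union> {{u, w}}" using x unfolding closed_nbhd_def adj_def by auto
      show ?thesis
      proof (cases "{x, v} \<in> edges G1")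
        case True
        then show ?thesis using simple_edge[OF s1 True] False unfolding closed_nbhd_def adj_def by auto
      next
        case n1: False
        have "{x, v} \<notin> edges G2" using simple_edge[OF s2, of x v] v d by auto
        then have "{x, v} = {u, w}" using e n1 by auto
        then have "x = w" "v = u" using vw by (auto simp: doubleton_eq_iff)
        then show ?thesis by simp
      qed
    qed
  next
    fix x assume x: "x \<in> closed_nbhd G1 v \<union> (if v = u then {w} else {})"
    then show "x \<in> closed_nbhd (edge_join G1 u w G2) v"
      unfolding closed_nbhd_def adj_def using vw w by (auto split: if_splits simp: insert_commute)
  qed
qed

lemma ej_row1: assumes j: "J G1 u w G2" and v: "v \<in> verts G1"
  shows "Nmul (edge_join G1 u w G2) p v = Nmul G1 p v + (if v = u then p w else 0)"
proof -
  have f: "finite (closed_nbhd G1 v)"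
    using j closed_nbhd_sub[of G1 v] unfolding J_def simple_graph_def by (meson finite_subset)
  have "w \<notin> closed_nbhd G1 v" using j closed_nbhd_sub[of G1 v] unfolding J_def by auto
  then show ?thesis
    using v f ej_nbhd1[OF j v] by (auto simp: Nmul_in)
qed

lemma ej_row2: assumes j: "J G1 u w G2" and v: "v \<in> verts G2"
  shows "Nmul (edge_join G1 u w G2) p v = Nmul G2 p v + (if v = w then p u else 0)"
  using ej_row1[OF J_sym[OF j] v] by (simp add: ej_sym[of G1])

lemma J_fin1: "J G1 u w G2 \<Longrightarrow> finite (verts G1)" unfolding J_def simple_graph_def by auto
lemma J_fin2: "J G1 u w G2 \<Longrightarrow> finite (verts G2)" unfolding J_def simple_graph_def by auto



lemma adj_verts: "simple_graph G \<Longrightarrow> adj G a b \<Longrightarrow> a \<in> verts G \<and> b \<in> verts G"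
  unfolding adj_def by (metis simple_edge)

lemma rtp_sym: assumes "\<And>a b. R a b \<Longrightarrow> R b a" "R\<^sup>*\<^sup>* a b" shows "R\<^sup>*\<^sup>* b a"
  using assms(2)
proof (induction rule: rtranclp_induct)
  case base then show ?case by simp
next
  case (step c d)
  then show ?case using assms(1) by (meson converse_rtranclp_into_rtranclp)
qed

lemma adj_rtp_sym: "(adj G)\<^sup>*\<^sup>* a b \<Longrightarrow> (adj G)\<^sup>*\<^sup>* b a"
  by (rule rtp_sym) (simp add: adj_sym)

lemma side_tree: assumes t: "tree T" and j: "J C z y R" and e: "T = edge_join C z y R"
  shows "tree C"
proof -
  have sC: "simple_graph C" and sR: "simple_graph R" and d: "verts C \<inter> verts R = {}"
    and z: "z \<in> verts C" and y: "y \<in> verts R" using j unfolding J_def by auto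
  have VT: "verts T = verts C \<union> verts R" and ET: "edges T = edges C \<union> edges R \<union> {{z, y}}"
    using e by simp_all
  define T' where "T' = (verts T, edges T - {{z, y}})"
  have adj': "adj T' a b \<longleftrightarrow> adj T a b \<and> {a, b} \<noteq> {z, y}" for a b
    unfolding T'_def adj_def edges_def by auto
  have cA: "(adj T')\<^sup>*\<^sup>* z v \<or> (adj T')\<^sup>*\<^sup>* y v" if "(adj T)\<^sup>*\<^sup>* z v" for v
    using that
  proof (induction rule: rtranclp_induct)
    case base then show ?case by simp
  next
    case (step a b)
    show ?case
    proof (cases "{a, b} = {z, y}")
      case True
      then have "b = z \<or> b = y" by (auto simp: doubleton_eq_iff)
      then show ?thesis by auto
    next
      case False
      then have "adj T' a b" using step(2) adj' by simp
      then show ?thesis using step(3) by (meson rtranclp.rtrancl_into_rtrancl)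
    qed
  qed
  have cB: "v \<in> verts R" if "(adj T')\<^sup>*\<^sup>* y v" for v
    using that
  proof (induction rule: rtranclp_induct)
    case base then show ?case using y by simp
  next
    case (step a b)
    then have ab: "a \<noteq> b" "{a, b} \<in> edges T" "{a, b} \<noteq> {z, y}" using adj' unfolding adj_def by auto
    have "{a, b} \<notin> edges C" using simple_edge[OF sC, of a b] step(3) d by auto
    then have "{a, b} \<in> edges R" using ab ET by auto
    then show ?case using simple_edge[OF sR] by blast
  qed
  have cC: "v \<in> verts C \<and> (adj C)\<^sup>*\<^sup>* z v" if "(adj T')\<^sup>*\<^sup>* z v" for v
    using that
  proof (induction rule: rtranclp_induct)
    case base then show ?case using z by simp
  next
    case (step a b)
    then have ab: "a \<noteq> b" "{a, b} \<in> edges T" "{a, b} \<noteq> {z, y}" using adj' unfolding adj_def by auto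
    have "{a, b} \<notin> edges R" using simple_edge[OF sR, of a b] step(3) d by auto
    then have ec: "{a, b} \<in> edges C" using ab ET by auto
    then have "b \<in> verts C" using simple_edge[OF sC] by blast
    moreover have "adj C a b" using ec ab(1) unfolding adj_def by simp
    ultimately show ?case using step(3) by (meson rtranclp.rtrancl_into_rtrancl)
  qed
  have reach: "(adj C)\<^sup>*\<^sup>* z v" if "v \<in> verts C" for v
  proof -
    have "(adj T)\<^sup>*\<^sup>* z v" using t that z VT unfolding tree_def connected_graph_def by blast
    then have "(adj T')\<^sup>*\<^sup>* z v \<or> (adj T')\<^sup>*\<^sup>* y v" by (rule cA)
    moreover have "\<not> (adj T')\<^sup>*\<^sup>* y v" using cB that d by blast
    ultimately show ?thesis using cC by blast
  qed
  have conn: "connected_graph C"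
    unfolding connected_graph_def
  proof (intro conjI ballI)
    show "verts C \<noteq> {}" using z by blast
    fix a b assume "a \<in> verts C" "b \<in> verts C"
    then show "(adj C)\<^sup>*\<^sup>* a b" using reach adj_rtp_sym by (meson rtranclp_trans)
  qed
  have acyc: "\<not> is_cycle C cs" for cs
  proof
    assume c: "is_cycle C cs"
    have "adj C a b \<Longrightarrow> adj T a b" for a b unfolding adj_def using ET by auto
    then have "is_cycle T cs" using c VT unfolding is_cycle_def by auto
    then show False using t unfolding tree_def by blast
  qed
  show ?thesis unfolding tree_def using sC conn acyc by blast
qed


lemma rtp_path: "rtrancl_path r x xs y \<Longrightarrow>
    (\<forall>i<length xs. r ((x#xs)!i) ((x#xs)!Suc i)) \<and> last (x#xs) = y"
proof (induction rule: rtrancl_path.induct)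
  case (base x) then show ?case by simp
next
  case (step x y ys z)
  have "r ((x#y#ys)!i) ((x#y#ys)!Suc i)" if "i < length (y#ys)" for i
  proof (cases i)
    case 0 then show ?thesis using step(1) by simp
  next
    case (Suc j) then show ?thesis using step(3) that by simp
  qed
  then show ?case using step(3) by simp
qed

lemma graph_eq: "G = (verts G, edges G)"
  unfolding verts_def edges_def by simp

lemma tree_split: assumes t: "tree T" and a: "adj T y u"
  shows "\<exists>B A. J B u y A \<and> T = edge_join B u y A"
proof -
  have s: "simple_graph T" using t unfolding tree_def by blast
  have uy: "u \<noteq> y" and e: "{u, y} \<in> edges T" using a unfolding adj_def by (auto simp: insert_commute)
  have uV: "u \<in> verts T" and yV: "y \<in> verts T" using adj_verts[OF s a] by auto
  define T' where "T' = (verts T, edges T - {{u, y}})"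
  have adj': "adj T' a b \<longleftrightarrow> adj T a b \<and> {a, b} \<noteq> {u, y}" for a b
    unfolding T'_def adj_def edges_def by auto
  define Vu where "Vu = {v \<in> verts T. (adj T')\<^sup>*\<^sup>* u v}"
  have ny: "\<not> (adj T')\<^sup>*\<^sup>* u y"
  proof
    assume "(adj T')\<^sup>*\<^sup>* u y"
    then obtain xs where "rtrancl_path (adj T') u xs y" by (auto simp: rtranclp_eq_rtrancl_path)
    then obtain xs' where p: "rtrancl_path (adj T') u xs' y" and dist: "distinct (u # xs')"
      by (rule rtrancl_path_distinct)
    have cons: "\<forall>i<length xs'. adj T' ((u#xs')!i) ((u#xs')!Suc i)" and l: "last (u#xs') = y"
      using rtp_path[OF p] by auto
    have ne: "xs' \<noteq> []" using l uy by auto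
    have "length xs' \<noteq> 1"
    proof
      assume "length xs' = 1"
      then obtain w where "xs' = [w]" by (cases xs') auto
      then have "adj T' u y" using cons l by auto
      then show False using adj' by simp
    qed
    moreover have "length xs' > 0" using ne by simp
    ultimately have len: "length (u#xs') \<ge> 3" unfolding length_Cons by linarith
    have cT: "adj T ((u#xs')!i) ((u#xs')!Suc i)" if "i < length xs'" for i
      using cons that adj' by blast
    have sub: "set (u#xs') \<subseteq> verts T"
    proof
      fix x assume "x \<in> set (u#xs')"
      then obtain k where k: "k < length (u#xs')" "x = (u#xs')!k" by (metis in_set_conv_nth)
      show "x \<in> verts T"
      proof (cases k)
        case 0 then show ?thesis using k uV by simp
      next
        case (Suc i)
        then have "i < length xs'" using k by simp
        then show ?thesis using adj_verts[OF s cT] k Suc by blast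
      qed
    qed
    have c1: "\<forall>i < length (u#xs') - 1. adj T ((u#xs')!i) ((u#xs')!Suc i)" using cT by simp
    have c2: "adj T (last (u#xs')) (hd (u#xs'))" using l a by simp
    have "is_cycle T (u#xs')"
      unfolding is_cycle_def using len dist sub c1 c2 by blast
    then show False using t unfolding tree_def by blast
  qed
  have clos: "b \<in> Vu" if "a \<in> Vu" "adj T' a b" for a b
  proof -
    have "adj T a b" using that(2) adj' by blast
    then have "b \<in> verts T" using adj_verts[OF s] by blast
    moreover have "(adj T')\<^sup>*\<^sup>* u a" using that(1) unfolding Vu_def by simp
    ultimately show ?thesis using that(2) unfolding Vu_def by (simp add: rtranclp.rtrancl_into_rtrancl)
  qed
  define B where "B = (Vu, {e \<in> edges T. e \<subseteq> Vu})"
  define A where "A = (verts T - Vu, {e \<in> edges T. e \<subseteq> verts T - Vu})"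
  have VB: "verts B = Vu" and EB: "edges B = {e \<in> edges T. e \<subseteq> Vu}"
    and VA: "verts A = verts T - Vu" and EA: "edges A = {e \<in> edges T. e \<subseteq> verts T - Vu}"
    unfolding B_def A_def verts_def edges_def by simp_all
  have fin: "finite (verts T)" using s unfolding simple_graph_def by blast
  have VuV: "Vu \<subseteq> verts T" unfolding Vu_def by blast
  have sB: "simple_graph B"
    unfolding simple_graph_def VB EB
  proof (intro conjI ballI)
    show "finite Vu" using fin VuV finite_subset by blast
    fix e assume e: "e \<in> {e \<in> edges T. e \<subseteq> Vu}"
    have "e \<in> edges T" using e by simp
    then obtain a b where ab: "a \<noteq> b" "e = {a, b}"
      using s unfolding simple_graph_def by meson
    have "a \<in> Vu" "b \<in> Vu" using e ab(2) by auto
    then show "\<exists>u v. u \<noteq> v \<and> u \<in> Vu \<and> v \<in> Vu \<and> e = {u, v}"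
      using ab by blast
  qed
  have sA: "simple_graph A"
    unfolding simple_graph_def VA EA
  proof (intro conjI ballI)
    show "finite (verts T - Vu)" using fin by blast
    fix e assume e: "e \<in> {e \<in> edges T. e \<subseteq> verts T - Vu}"
    have "e \<in> edges T" using e by simp
    then obtain a b where ab: "a \<noteq> b" "e = {a, b}"
      using s unfolding simple_graph_def by meson
    have "a \<in> verts T - Vu" "b \<in> verts T - Vu" using e ab(2) by auto
    then show "\<exists>u v. u \<noteq> v \<and> u \<in> verts T - Vu \<and> v \<in> verts T - Vu \<and> e = {u, v}"
      using ab by blast
  qed
  have uVu: "u \<in> Vu" unfolding Vu_def using uV by simp
  have yA: "y \<notin> Vu" unfolding Vu_def using ny by simp
  have dd: "Vu \<inter> (verts T - Vu) = {}" by blast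
  have j: "J B u y A" unfolding J_def VA VB using sA sB uVu yA yV dd by simp
  have "edges T = edges B \<union> edges A \<union> {{u, y}}"
  proof (intro equalityI subsetI)
    fix x assume x: "x \<in> edges T"
    then obtain a b where ab: "a \<noteq> b" "a \<in> verts T" "b \<in> verts T" "x = {a, b}"
      using s unfolding simple_graph_def by blast
    show "x \<in> edges B \<union> edges A \<union> {{u, y}}"
    proof (cases "x = {u, y}")
      case True then show ?thesis by simp
    next
      case False
      then have "adj T' a b" "adj T' b a" using ab x adj' unfolding adj_def by (auto simp: insert_commute)
      then have "(a \<in> Vu \<and> b \<in> Vu) \<or> (a \<notin> Vu \<and> b \<notin> Vu)" using clos by blast
      then show ?thesis using ab x unfolding EB EA by auto
    qed
  next
    fix x assume "x \<in> edges B \<union> edges A \<union> {{u, y}}"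
    then show "x \<in> edges T" using e unfolding EB EA by auto
  qed
  moreover have "verts T = verts B \<union> verts A" unfolding VB VA using VuV by blast
  ultimately have "(verts T, edges T) = edge_join B u y A"
    unfolding edge_join_def by simp
  then have "T = edge_join B u y A" using graph_eq[of T] by simp
  with j show ?thesis by blast
qed

lemma tree_split_trees: assumes t: "tree T" and a: "adj T y u"
  shows "\<exists>B A. J B u y A \<and> T = edge_join B u y A \<and> tree B \<and> tree A"
proof -
  obtain B A where j: "J B u y A" and e: "T = edge_join B u y A" using tree_split[OF t a] by blast
  have "tree B" using side_tree[OF t j e] .
  moreover have "T = edge_join A y u B" by (simp only: e ej_sym[of B u y A])
  then have "tree A" using side_tree[OF t J_sym[OF j]] by simp
  ultimately show ?thesis using j e by blast
qed



lemma row1: assumes "J G1 u w G2" "v \<in> verts G1"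
  shows "Nmul G1 p v = Nmul (edge_join G1 u w G2) p v + (if v = u then p w else 0)"
  using ej_row1[OF assms, of p] by (simp add: add.assoc)

lemma row2: assumes "J G1 u w G2" "v \<in> verts G2"
  shows "Nmul G2 p v = Nmul (edge_join G1 u w G2) p v + (if v = w then p u else 0)"
  using ej_row2[OF assms, of p] by (simp add: add.assoc)

lemma ej_null: assumes j: "J G1 u w G2"
  and r1: "\<And>v. v \<in> verts G1 \<Longrightarrow> Nmul G1 l v + (if v = u then l w else 0) = 0"
  and r2: "\<And>v. v \<in> verts G2 \<Longrightarrow> Nmul G2 l v + (if v = w then l u else 0) = 0"
  shows "Nmul (edge_join G1 u w G2) l = (\<lambda>_. 0)"
proof
  fix v
  show "Nmul (edge_join G1 u w G2) l v = 0"
  proof (cases "v \<in> verts G1")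
    case True then show ?thesis using ej_row1[OF j True] r1[OF True] by simp
  next
    case n1: False
    show ?thesis
    proof (cases "v \<in> verts G2")
      case True then show ?thesis using ej_row2[OF j True] r2[OF True] by simp
    next
      case False then show ?thesis using n1 by (simp add: Nmul_out)
    qed
  qed
qed

lemma Nmul_other: assumes "q \<in> patterns G1" "verts G1 \<inter> verts G2 = {}"
  shows "Nmul G2 q = (\<lambda>_. 0)"
proof (rule Nmul_zero)
  fix x assume "x \<in> verts G2"
  then have "x \<notin> verts G1" using assms(2) by blast
  then show "q x = 0" using assms(1) unfolding patterns_def by blast
qed

lemma pat_ej1: "q \<in> patterns G1 \<Longrightarrow> q \<in> patterns (edge_join G1 u w G2)"
  unfolding patterns_def by simp
lemma pat_ej2: "q \<in> patterns G2 \<Longrightarrow> q \<in> patterns (edge_join G1 u w G2)"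
  unfolding patterns_def by simp

lemma pat_out: "q \<in> patterns G \<Longrightarrow> x \<notin> verts G \<Longrightarrow> q x = 0"
  unfolding patterns_def by blast

lemma inv_zero: assumes "inv_g G" "l \<in> patterns G" "Nmul G l = (\<lambda>_. 0)" shows "l x = 0"
proof -
  have "l = (\<lambda>_. 0)" using assms unfolding inv_g_def by blast
  then show ?thesis by simp
qed

lemma zero_from_parts: assumes "l \<in> patterns (edge_join G1 u w G2)"
  "\<And>x. x \<in> verts G1 \<Longrightarrow> l x = 0" "\<And>x. x \<in> verts G2 \<Longrightarrow> l x = 0"
  shows "l = (\<lambda>_. 0)"
proof
  fix x show "l x = 0"
    using assms pat_out[OF assms(1), of x] by auto
qed

lemma glue1: assumes j: "J G1 u w G2" and i1: "inv_g G1" and i2: "inv_g G2"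
  and s1: "Nmul G1 s1 = ones G1" and s1u: "s1 u = 0"
  shows "inv_g (edge_join G1 u w G2)"
  unfolding inv_g_def
proof (intro ballI impI)
  have f1: "finite (verts G1)" using j by (rule J_fin1)
  have u: "u \<in> verts G1" and w: "w \<in> verts G2" using j unfolding J_def by auto
  fix l assume lp: "l \<in> patterns (edge_join G1 u w G2)" and ln: "Nmul (edge_join G1 u w G2) l = (\<lambda>_. 0)"
  have r1: "Nmul G1 l v = (if v = u then l w else 0)" if "v \<in> verts G1" for v
    using row1[OF j that, of l] ln by simp
  have r2: "Nmul G2 l v = (if v = w then l u else 0)" if "v \<in> verts G2" for v
    using row2[OF j that, of l] ln by simp
  have lw: "l w = 0"
  proof (rule ccontr)
    assume "l w \<noteq> 0"
    then have "l w = 1" by simp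
    then have "Nmul G1 l v = ev u v" if "v \<in> verts G1" for v using r1[OF that] by (simp add: ev_def)
    then have "l u = s1 u" using part_diag[OF f1 u s1] by blast
    then have "Nmul G2 l v = 0" if "v \<in> verts G2" for v using r2[OF that] s1u by simp
    then have "l w = 0" using inv_part_zero[OF i2 _ w] by blast
    with \<open>l w = 1\<close> show False by simp
  qed
  have z1: "l x = 0" if "x \<in> verts G1" for x
    using inv_part_zero[OF i1 _ that, of l] r1 lw by simp
  have z2: "l x = 0" if "x \<in> verts G2" for x
    using inv_part_zero[OF i2 _ that, of l] r2 z1[OF u] by simp
  show "l = (\<lambda>_. 0)" using zero_from_parts[OF lp z1 z2] .
qed


lemma glue2: assumes j1: "J T1 x y T2" and j2: "J (edge_join T1 x y T2) y z T3"
  and i1: "inv_g T1" and i2: "inv_g T2" and i3: "inv_g T3"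
  and s1: "Nmul T1 s1 = ones T1" "s1 x = 1" and s3: "Nmul T3 s3 = ones T3" "s3 z = 1"
  shows "inv_g (edge_join (edge_join T1 x y T2) y z T3)"
  unfolding inv_g_def
proof (intro ballI impI)
  let ?X = "edge_join T1 x y T2"
  have f1: "finite (verts T1)" using j1 by (rule J_fin1)
  have f3: "finite (verts T3)" using j2 by (rule J_fin2)
  have x: "x \<in> verts T1" and y: "y \<in> verts T2" and d12: "verts T1 \<inter> verts T2 = {}"
    using j1 unfolding J_def by auto
  have z: "z \<in> verts T3" using j2 unfolding J_def by auto
  fix l assume lp: "l \<in> patterns (edge_join ?X y z T3)" and ln: "Nmul (edge_join ?X y z T3) l = (\<lambda>_. 0)"
  have rX: "Nmul ?X l v = (if v = y then l z else 0)" if "v \<in> verts ?X" for v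
    using row1[OF j2 that, of l] ln by simp
  have r3: "Nmul T3 l v = (if v = z then l y else 0)" if "v \<in> verts T3" for v
    using row2[OF j2 that, of l] ln by simp
  have r1: "Nmul T1 l v = (if v = x then l y else 0)" if "v \<in> verts T1" for v
  proof -
    have "v \<noteq> y" using that y d12 by blast
    then show ?thesis using row1[OF j1 that, of l] rX[of v] that by simp
  qed
  have r2: "Nmul T2 l v = (if v = y then l z + l x else 0)" if "v \<in> verts T2" for v
    using row2[OF j1 that, of l] rX[of v] that by simp
  have ly: "l y = 0"
  proof (rule ccontr)
    assume "l y \<noteq> 0"
    then have ly1: "l y = 1" by simp
    then have "Nmul T3 l v = ev z v" if "v \<in> verts T3" for v using r3[OF that] by (simp add: ev_def)
    then have lz: "l z = 1" using part_diag[OF f3 z s3(1)] s3(2) by simp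
    have "Nmul T1 l v = ev x v" if "v \<in> verts T1" for v using r1[OF that] ly1 by (simp add: ev_def)
    then have lx: "l x = 1" using part_diag[OF f1 x s1(1)] s1(2) by simp
    have "Nmul T2 l v = 0" if "v \<in> verts T2" for v using r2[OF that] lz lx by simp
    then have "l y = 0" using inv_part_zero[OF i2 _ y] by blast
    with ly1 show False by simp
  qed
  have z3: "l v = 0" if "v \<in> verts T3" for v
    using inv_part_zero[OF i3 _ that, of l] r3 ly by simp
  have z1: "l v = 0" if "v \<in> verts T1" for v
    using inv_part_zero[OF i1 _ that, of l] r1 ly by simp
  have z2: "l v = 0" if "v \<in> verts T2" for v
    using inv_part_zero[OF i2 _ that, of l] r2 z1[OF x] z3[OF z] by simp
  have zX: "l v = 0" if "v \<in> verts ?X" for v using z1 z2 that by auto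
  show "l = (\<lambda>_. 0)" using zero_from_parts[OF lp zX z3] .
qed

lemma pair_ev: assumes "finite (verts G)" "x \<in> verts G"
  shows "(\<Sum>v\<in>verts G. m v * ev x v) = m x"
proof -
  have "(\<Sum>v\<in>verts G. m v * ev x v) = (\<Sum>v\<in>verts G. if v = x then m v else 0)"
    by (intro sum.cong) (auto simp: ev_def)
  also have "\<dots> = m x" using assms by simp
  finally show ?thesis .
qed

lemma glue3: assumes j1: "J T1 a b T2" and j2: "J T3 y x (edge_join T1 a b T2)"
  and i1: "inv_g T1" and i2: "inv_g T2" and i3: "inv_g T3"
  and s3: "Nmul T3 s3 = ones T3" "s3 y = 1" and h: "half_activated (edge_join T1 a b T2) x"
  shows "inv_g (edge_join T3 y x (edge_join T1 a b T2))"
  unfolding inv_g_def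
proof (intro ballI impI)
  let ?X = "edge_join T1 a b T2"
  have fX: "finite (verts ?X)" using j2 by (rule J_fin2)
  have f3: "finite (verts T3)" using j2 by (rule J_fin1)
  have a: "a \<in> verts T1" and b: "b \<in> verts T2" and d12: "verts T1 \<inter> verts T2 = {}"
    using j1 unfolding J_def by auto
  have x: "x \<in> verts ?X" and y: "y \<in> verts T3" using j2 unfolding J_def by auto
  have Xnull: "m v = 0" if m: "\<And>v. v \<in> verts ?X \<Longrightarrow> Nmul ?X m v = 0" and mb: "m b = 0"
    and v: "v \<in> verts ?X" for m v
  proof -
    have "Nmul T1 m w = 0" if "w \<in> verts T1" for w
      using row1[OF j1 that, of m] m[of w] mb that by simp
    then have z1: "m w = 0" if "w \<in> verts T1" for w using inv_part_zero[OF i1 _ that] by blast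
    have "Nmul T2 m w = 0" if "w \<in> verts T2" for w
      using row2[OF j1 that, of m] m[of w] z1[OF a] that by simp
    then have z2: "m w = 0" if "w \<in> verts T2" for w using inv_part_zero[OF i2 _ that] by blast
    show ?thesis using v z1 z2 by auto
  qed
  obtain m0 where m0: "m0 \<in> patterns ?X" "Nmul ?X m0 = (\<lambda>_. 0)" "m0 x = 1"
    using h unfolding half_activated_def null_patterns_def by blast
  fix l assume lp: "l \<in> patterns (edge_join T3 y x ?X)" and ln: "Nmul (edge_join T3 y x ?X) l = (\<lambda>_. 0)"
  have r3: "Nmul T3 l v = (if v = y then l x else 0)" if "v \<in> verts T3" for v
    using row1[OF j2 that, of l] ln by simp
  have rX: "Nmul ?X l v = (if v = x then l y else 0)" if "v \<in> verts ?X" for v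
    using row2[OF j2 that, of l] ln by simp
  have lx: "l x = 0"
  proof (rule ccontr)
    assume "l x \<noteq> 0"
    then have "l x = 1" by simp
    then have "Nmul T3 l v = ev y v" if "v \<in> verts T3" for v using r3[OF that] by (simp add: ev_def)
    then have ly: "l y = 1" using part_diag[OF f3 y s3(1)] s3(2) by simp
    have e: "Nmul ?X l v = ev x v" if "v \<in> verts ?X" for v using rX[OF that] ly by (simp add: ev_def)
    have "(\<Sum>v\<in>verts ?X. m0 v * Nmul ?X l v) = (\<Sum>v\<in>verts ?X. m0 v * ev x v)"
      using e by (intro sum.cong) auto
    also have "\<dots> = 1" using pair_ev[OF fX x] m0(3) by simp
    finally have 1: "(\<Sum>v\<in>verts ?X. m0 v * Nmul ?X l v) = 1" .
    have "(\<Sum>v\<in>verts ?X. m0 v * Nmul ?X l v) = (\<Sum>v\<in>verts ?X. Nmul ?X m0 v * l v)"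
      using fX by (rule pair_sym)
    also have "\<dots> = 0" using m0(2) by simp
    finally show False using 1 by simp
  qed
  have z3: "l v = 0" if "v \<in> verts T3" for v
    using inv_part_zero[OF i3 _ that, of l] r3 lx by simp
  have rX0: "Nmul ?X l v = 0" if "v \<in> verts ?X" for v using rX[OF that] z3[OF y] by simp
  have lb: "l b = 0"
  proof (rule ccontr)
    assume "l b \<noteq> 0"
    then have lb1: "l b = 1" by simp
    have "m0 b \<noteq> 0"
    proof
      assume "m0 b = 0"
      then have "m0 x = 0" using Xnull[of m0 x] m0(2) x by simp
      with m0(3) show False by simp
    qed
    then have "m0 b = 1" by simp
    have "Nmul ?X (\<lambda>v. l v + m0 v) v = 0" if "v \<in> verts ?X" for v
      using rX0[OF that] m0(2) by (simp add: Nmul_add)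
    moreover have "l b + m0 b = 0" using lb1 \<open>m0 b = 1\<close> by simp
    ultimately have "l x + m0 x = 0" using Xnull[of "\<lambda>v. l v + m0 v" x] x by simp
    then show False using lx m0(3) by simp
  qed
  have zX: "l v = 0" if "v \<in> verts ?X" for v
    using Xnull[of l v] rX0 lb that by simp
  show "l = (\<lambda>_. 0)" using zero_from_parts[OF lp z3 zX] .
qed


lemma side: assumes j: "J B u y A" and i: "inv_g (edge_join B u y A)"
  and sp: "s \<in> patterns (edge_join B u y A)" and ss: "Nmul (edge_join B u y A) s = ones (edge_join B u y A)"
  and sy: "s y = 1"
  shows "inv_g B \<and> s u = 0"
proof -
  let ?G = "edge_join B u y A"
  have fB: "finite (verts B)" using j by (rule J_fin1)
  have fG: "finite (verts ?G)" using J_fin1[OF j] J_fin2[OF j] by simp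
  have u: "u \<in> verts B" and y: "y \<in> verts A" and d: "verts B \<inter> verts A = {}"
    using j unfolding J_def by auto
  have rB: "Nmul B s v = 1 + ev u v" if "v \<in> verts B" for v
    using row1[OF j that, of s] ss that sy by (simp add: ones_def ev_def)
  have iB: "inv_g B"
    unfolding inv_g_def
  proof (intro ballI impI)
    fix l assume lp: "l \<in> patterns B" and ln: "Nmul B l = (\<lambda>_. 0)"
    have "(\<Sum>v\<in>verts B. l v * Nmul B s v) = (\<Sum>v\<in>verts B. Nmul B l v * s v)"
      using fB by (rule pair_sym)
    also have "\<dots> = 0" using ln by simp
    finally have p1: "(\<Sum>v\<in>verts B. l v * Nmul B s v) = 0" .
    have "(\<Sum>v\<in>verts B. l v * Nmul B s v) = (\<Sum>v\<in>verts B. l v + l v * ev u v)"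
      using rB by (intro sum.cong) (auto simp: distrib_left)
    also have "\<dots> = (\<Sum>v\<in>verts B. l v) + l u"
      using pair_ev[OF fB u] by (simp add: sum.distrib)
    finally have p2: "(\<Sum>v\<in>verts B. l v * Nmul B s v) = (\<Sum>v\<in>verts B. l v) + l u" .
    have "(\<Sum>v\<in>verts B. l v) = (\<Sum>v\<in>verts B. l v * Nmul B l v)"
      using pair_diag[OF fB, of l] by simp
    also have "\<dots> = 0" using ln by simp
    finally have p3: "(\<Sum>v\<in>verts B. l v) = 0" .
    have lu: "l u = 0" using p1 p2 p3 by simp
    have ly: "l y = 0" using pat_out[OF lp] y d by blast
    have lG: "l \<in> patterns ?G" using lp by (rule pat_ej1)
    have "Nmul ?G l = (\<lambda>_. 0)"
    proof (rule ej_null[OF j])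
      fix v assume "v \<in> verts B"
      then show "Nmul B l v + (if v = u then l y else 0) = 0" using ln ly by simp
    next
      fix v assume "v \<in> verts A"
      then show "Nmul A l v + (if v = y then l u else 0) = 0"
        using Nmul_other[OF lp d] lu by simp
    qed
    then show "l = (\<lambda>_. 0)" using i lG unfolding inv_g_def by blast
  qed
  obtain sB where sB: "sB \<in> patterns B" "Nmul B sB = ones B"
    using inv_surj[OF fB iB ones_pat] by blast
  have "Nmul B (\<lambda>x. s x + sB x) v = ev u v" if "v \<in> verts B" for v
    using rB[OF that] sB(2) that by (simp add: Nmul_add ones_def add.commute add.left_commute)
  then have "s u + sB u = sB u" using part_diag[OF fB u sB(2)] by blast
  then have "s u = 0" by (metis add_cancel_left_left)
  with iB show ?thesis by blast
qed

lemma restr_sol: assumes j: "J B u y A" and ss: "Nmul (edge_join B u y A) s = ones (edge_join B u y A)"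
  and su: "s u = 0"
  shows "Nmul A (rs (verts A) s) = ones A"
proof
  fix v show "Nmul A (rs (verts A) s) v = ones A v"
  proof (cases "v \<in> verts A")
    case True
    then show ?thesis using row2[OF j True, of s] ss su by (simp add: Nmul_rs ones_def)
  next
    case False then show ?thesis by (simp add: Nmul_out ones_def)
  qed
qed

lemma case1: assumes j: "J B u y A" and i: "inv_g (edge_join B u y A)"
  and sp: "s \<in> patterns (edge_join B u y A)" and ss: "Nmul (edge_join B u y A) s = ones (edge_join B u y A)"
  and sy: "s y = 1" and iA: "inv_g A"
  shows "inv_g B \<and> activation B u = 0 \<and> activation A y = 1"
proof -
  let ?G = "edge_join B u y A"
  have fB: "finite (verts B)" using j by (rule J_fin1)
  have fA: "finite (verts A)" using j by (rule J_fin2)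
  have u: "u \<in> verts B" and y: "y \<in> verts A" and d: "verts B \<inter> verts A = {}"
    using j unfolding J_def by auto
  have d': "verts A \<inter> verts B = {}" using d by blast
  have iB: "inv_g B" and su: "s u = 0" using side[OF j i sp ss sy] by auto
  have sA: "Nmul A (rs (verts A) s) = ones A" using restr_sol[OF j ss su] .
  have actA: "activation A y = 1"
    using act_inv[OF iA rs_pat sA] y sy by (simp add: rs_def)
  obtain sB where sB: "sB \<in> patterns B" "Nmul B sB = ones B"
    using inv_surj[OF fB iB ones_pat] by blast
  have sBu: "sB u = 0"
  proof (rule ccontr)
    assume "sB u \<noteq> 0"
    then have sBu1: "sB u = 1" by simp
    obtain qB where qB: "qB \<in> patterns B" "Nmul B qB = ev u"
      using inv_surj[OF fB iB ev_pat[OF u]] by blast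
    obtain qA where qA: "qA \<in> patterns A" "Nmul A qA = ev y"
      using inv_surj[OF fA iA ev_pat[OF y]] by blast
    have qBu: "qB u = 1" using part_diag[OF fB u sB(2), of qB] qB(2) sBu1 by simp
    have qAy: "qA y = 1" using part_diag[OF fA y sA, of qA] qA(2) y sy by (simp add: rs_def)
    have qBy: "qB y = 0" using pat_out[OF qB(1)] y d by blast
    have qAu: "qA u = 0" using pat_out[OF qA(1)] u d by blast
    let ?l = "\<lambda>x. qB x + qA x"
    have lG: "?l \<in> patterns ?G" using pat_add[OF pat_ej1[OF qB(1)] pat_ej2[OF qA(1)]] .
    have "Nmul ?G ?l = (\<lambda>_. 0)"
    proof (rule ej_null[OF j])
      fix v assume "v \<in> verts B"
      then show "Nmul B ?l v + (if v = u then ?l y else 0) = 0"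
        using qB(2) Nmul_other[OF qA(1) d'] qBy qAy by (simp add: Nmul_add ev_def)
    next
      fix v assume "v \<in> verts A"
      then show "Nmul A ?l v + (if v = y then ?l u else 0) = 0"
        using qA(2) Nmul_other[OF qB(1) d] qBu qAu by (simp add: Nmul_add ev_def)
    qed
    then have "?l u = 0" using inv_zero[OF i lG] by blast
    then show False using qBu qAu by simp
  qed
  have "activation B u = 0" using act_inv[OF iB sB] sBu by simp
  with iB actA show ?thesis by blast
qed

lemma case2: assumes j: "J B u y A" and i: "inv_g (edge_join B u y A)"
  and sp: "s \<in> patterns (edge_join B u y A)" and ss: "Nmul (edge_join B u y A) s = ones (edge_join B u y A)"
  and sy: "s y = 1" and niA: "\<not> inv_g A"
  shows "inv_g B \<and> activation B u = 1 \<and> half_activated A y"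
proof -
  let ?G = "edge_join B u y A"
  have fB: "finite (verts B)" using j by (rule J_fin1)
  have u: "u \<in> verts B" and y: "y \<in> verts A" and d: "verts B \<inter> verts A = {}"
    using j unfolding J_def by auto
  have d': "verts A \<inter> verts B = {}" using d by blast
  have iB: "inv_g B" and su: "s u = 0" using side[OF j i sp ss sy] by auto
  obtain m where m: "m \<in> patterns A" "Nmul A m = (\<lambda>_. 0)" "m \<noteq> (\<lambda>_. 0)"
    using niA unfolding inv_g_def by blast
  have mu: "m u = 0" using pat_out[OF m(1)] u d by blast
  have my: "m y = 1"
  proof (rule ccontr)
    assume "m y \<noteq> 1"
    then have my0: "m y = 0" by simp
    have "Nmul ?G m = (\<lambda>_. 0)"
    proof (rule ej_null[OF j])
      fix v assume "v \<in> verts B"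
      then show "Nmul B m v + (if v = u then m y else 0) = 0"
        using Nmul_other[OF m(1) d'] my0 by simp
    next
      fix v assume "v \<in> verts A"
      then show "Nmul A m v + (if v = y then m u else 0) = 0"
        using m(2) mu by simp
    qed
    then have "m = (\<lambda>_. 0)" using i pat_ej2[OF m(1)] unfolding inv_g_def by blast
    with m(3) show False by simp
  qed
  have half: "half_activated A y"
    unfolding half_activated_def null_patterns_def using m(1,2) my by blast
  obtain sB where sB: "sB \<in> patterns B" "Nmul B sB = ones B"
    using inv_surj[OF fB iB ones_pat] by blast
  have sBu: "sB u = 1"
  proof (rule ccontr)
    assume "sB u \<noteq> 1"
    then have sBu0: "sB u = 0" by simp
    obtain qB where qB: "qB \<in> patterns B" "Nmul B qB = ev u"
      using inv_surj[OF fB iB ev_pat[OF u]] by blast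
    have qBu: "qB u = 0" using part_diag[OF fB u sB(2), of qB] qB(2) sBu0 by simp
    have qBy: "qB y = 0" using pat_out[OF qB(1)] y d by blast
    let ?l = "\<lambda>x. qB x + m x"
    have lG: "?l \<in> patterns ?G" using pat_add[OF pat_ej1[OF qB(1)] pat_ej2[OF m(1)]] .
    have "Nmul ?G ?l = (\<lambda>_. 0)"
    proof (rule ej_null[OF j])
      fix v assume "v \<in> verts B"
      then show "Nmul B ?l v + (if v = u then ?l y else 0) = 0"
        using qB(2) Nmul_other[OF m(1) d'] qBy my by (simp add: Nmul_add ev_def)
    next
      fix v assume "v \<in> verts A"
      then show "Nmul A ?l v + (if v = y then ?l u else 0) = 0"
        using m(2) Nmul_other[OF qB(1) d] qBu mu by (simp add: Nmul_add)
    qed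
    then have "?l y = 0" using inv_zero[OF i lG] by blast
    then show False using qBy my by simp
  qed
  have "activation B u = 1" using act_inv[OF iB sB] sBu by simp
  with iB half show ?thesis by blast
qed



lemma tree_simple: "tree T \<Longrightarrow> simple_graph T" unfolding tree_def by blast
lemma tree_fin: "tree T \<Longrightarrow> finite (verts T)" unfolding tree_def simple_graph_def by blast

lemma act1_sol: assumes "finite (verts G)" "inv_g G" "activation G v = 1"
  obtains s where "s \<in> patterns G" "Nmul G s = ones G" "s v = 1"
proof -
  obtain s where s: "s \<in> patterns G" "Nmul G s = ones G" using inv_surj[OF assms(1,2) ones_pat] by blast
  have "(if s v = 1 then 1 else 0) = (1::int)" using act_inv[OF assms(2) s] assms(3) by simp
  then have "s v = 1" by (metis zero_neq_one)
  then show ?thesis using that s by blast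
qed

lemma act0_sol: assumes "finite (verts G)" "inv_g G" "activation G v = 0"
  obtains s where "s \<in> patterns G" "Nmul G s = ones G" "s v = 0"
proof -
  obtain s where s: "s \<in> patterns G" "Nmul G s = ones G" using inv_surj[OF assms(1,2) ones_pat] by blast
  have "(if s v = 1 then 1 else 0) = (0::int)" using act_inv[OF assms(2) s] assms(3) by simp
  then have "s v = 0" by (metis bit_not_one_iff one_neq_zero)
  then show ?thesis using that s by blast
qed

lemma star_rows: assumes j1: "J B u y A'" and j2: "J C z y (edge_join B u y A')"
  shows "\<And>v. v \<in> verts C \<Longrightarrow> Nmul (edge_join C z y (edge_join B u y A')) p v = Nmul C p v + (if v = z then p y else 0)"
    and "\<And>v. v \<in> verts B \<Longrightarrow> Nmul (edge_join C z y (edge_join B u y A')) p v = Nmul B p v + (if v = u then p y else 0)"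
    and "\<And>v. v \<in> verts A' \<Longrightarrow> Nmul (edge_join C z y (edge_join B u y A')) p v = Nmul A' p v + (if v = y then p u + p z else 0)"
proof -
  let ?R = "edge_join B u y A'"
  have y: "y \<in> verts A'" and d: "verts B \<inter> verts A' = {}" using j1 unfolding J_def by auto
  fix v
  show "v \<in> verts C \<Longrightarrow> Nmul (edge_join C z y ?R) p v = Nmul C p v + (if v = z then p y else 0)"
    using ej_row1[OF j2] by blast
  show "v \<in> verts B \<Longrightarrow> Nmul (edge_join C z y ?R) p v = Nmul B p v + (if v = u then p y else 0)"
  proof -
    assume v: "v \<in> verts B"
    then have "v \<noteq> y" using y d by blast
    then show ?thesis using ej_row2[OF j2, of v p] ej_row1[OF j1 v, of p] v by simp
  qed
  show "v \<in> verts A' \<Longrightarrow> Nmul (edge_join C z y ?R) p v = Nmul A' p v + (if v = y then p u + p z else 0)"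
  proof -
    assume v: "v \<in> verts A'"
    then show ?thesis using ej_row2[OF j2, of v p] ej_row2[OF j1 v, of p] v by (simp add: add.assoc)
  qed
qed

lemma star_null: assumes j1: "J B u y A'" and j2: "J C z y (edge_join B u y A')"
  and rC: "\<And>v. v \<in> verts C \<Longrightarrow> Nmul C p v + (if v = z then p y else 0) = 0"
  and rB: "\<And>v. v \<in> verts B \<Longrightarrow> Nmul B p v + (if v = u then p y else 0) = 0"
  and rA: "\<And>v. v \<in> verts A' \<Longrightarrow> Nmul A' p v + (if v = y then p u + p z else 0) = 0"
  shows "Nmul (edge_join C z y (edge_join B u y A')) p = (\<lambda>_. 0)"
proof
  fix v
  show "Nmul (edge_join C z y (edge_join B u y A')) p v = 0"
  proof (cases "v \<in> verts C")
    case True then show ?thesis using star_rows(1)[OF j1 j2 True] rC[OF True] by simp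
  next
    case nC: False
    show ?thesis
    proof (cases "v \<in> verts B")
      case True then show ?thesis using star_rows(2)[OF j1 j2 True] rB[OF True] by simp
    next
      case nB: False
      show ?thesis
      proof (cases "v \<in> verts A'")
        case True then show ?thesis using star_rows(3)[OF j1 j2 True] rA[OF True] by simp
      next
        case False then show ?thesis using nB nC by (simp add: Nmul_out)
      qed
    qed
  qed
qed


lemma ej_assoc3: "edge_join B u y (edge_join C z y A') = edge_join C z y (edge_join B u y A')"
  unfolding edge_join_def by (simp add: verts_def edges_def Un_ac insert_commute)

lemma exists_nbr: assumes t: "tree T" and y: "y \<in> verts T" and v: "v \<in> verts T" "v \<noteq> y"
  obtains u where "adj T y u"
proof -
  have "(adj T)\<^sup>*\<^sup>* y v" using t y v unfolding tree_def connected_graph_def by blast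
  then show ?thesis using v(2) that by (metis converse_rtranclpE)
qed

lemma struct:
  assumes t: "tree T" and c: "card (verts T) \<ge> 2" and iT: "inv_g T"
  shows "(\<exists>T1 T2 u w. tree T1 \<and> tree T2 \<and> J T1 u w T2 \<and> inv_g T1 \<and> inv_g T2 \<and>
            activation T1 u = 0 \<and> activation T2 w = 1 \<and> T = edge_join T1 u w T2)
       \<or> (\<exists>B A' C u y z. tree B \<and> tree A' \<and> tree C \<and> J B u y A' \<and> J C z y (edge_join B u y A') \<and>
            inv_g B \<and> inv_g A' \<and> inv_g C \<and> activation B u = 1 \<and> activation A' y = 1 \<and>
            activation C z = 1 \<and> half_activated (edge_join B u y A') y \<and>
            T = edge_join C z y (edge_join B u y A'))"
proof -
  have fT: "finite (verts T)" using t by (rule tree_fin)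
  obtain s where sp: "s \<in> patterns T" and ss: "Nmul T s = ones T"
    using inv_surj[OF fT iT ones_pat] by blast
  have ne: "verts T \<noteq> {}" using c by auto
  have "\<exists>y\<in>verts T. s y = 1"
  proof (rule ccontr)
    assume "\<not> (\<exists>y\<in>verts T. s y = 1)"
    then have "s x = 0" if "x \<in> verts T" for x using that by auto
    then have "Nmul T s = (\<lambda>_. 0)" by (rule Nmul_zero)
    moreover obtain v where "v \<in> verts T" using ne by blast
    ultimately show False using ss unfolding ones_def by (metis zero_neq_one)
  qed
  then obtain y where yV: "y \<in> verts T" and sy: "s y = 1" by blast
  have "\<not> verts T \<subseteq> {y}"
  proof
    assume "verts T \<subseteq> {y}"
    then have "card (verts T) \<le> card {y}" by (intro card_mono) auto
    with c show False by simp
  qed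
  then obtain v where v: "v \<in> verts T" "v \<noteq> y" by blast
  obtain u where ayu: "adj T y u" using exists_nbr[OF t yV v] .
  obtain B A where jBA: "J B u y A" and TBA: "T = edge_join B u y A" and tB: "tree B" and tA: "tree A"
    using tree_split_trees[OF t ayu] by blast
  have iG: "inv_g (edge_join B u y A)" using iT TBA by simp
  have spG: "s \<in> patterns (edge_join B u y A)" using sp TBA by simp
  have ssG: "Nmul (edge_join B u y A) s = ones (edge_join B u y A)" using ss TBA by simp
  show ?thesis
  proof (cases "inv_g A")
    case True
    then have "inv_g B \<and> activation B u = 0 \<and> activation A y = 1" using case1[OF jBA iG spG ssG sy] by blast
    then show ?thesis using tB tA jBA True TBA by blast
  next
    case False
    have iB: "inv_g B" and aBu: "activation B u = 1" and hA: "half_activated A y"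
      using case2[OF jBA iG spG ssG sy False] by auto
    have su: "s u = 0" using side[OF jBA iG spG ssG sy] by blast
    obtain m where m: "m \<in> patterns A" "Nmul A m = (\<lambda>_. 0)" "m y = 1"
      using hA unfolding half_activated_def null_patterns_def by blast
    have yA: "y \<in> verts A" using jBA unfolding J_def by blast
    have "\<not> verts A \<subseteq> {y}"
    proof
      assume "verts A \<subseteq> {y}"
      then have "closed_nbhd A y = {y}" using yA unfolding closed_nbhd_def by auto
      then have "Nmul A m y = m y" using yA by (simp add: Nmul_in)
      then show False using m by simp
    qed
    then obtain v' where v': "v' \<in> verts A" "v' \<noteq> y" by blast
    obtain z where ayz: "adj A y z" using exists_nbr[OF tA yA v'] .
    obtain C A' where jCA': "J C z y A'" and ACA': "A = edge_join C z y A'" and tC: "tree C" and tA': "tree A'"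
      using tree_split_trees[OF tA ayz] by blast
    let ?R = "edge_join B u y A'"
    have TR: "T = edge_join C z y ?R" using TBA ACA' ej_assoc3 by simp
    have VA: "verts A = verts C \<union> verts A'" using ACA' by simp
    have jBA': "J B u y A'" using jBA jCA' VA unfolding J_def by auto
    have sR: "simple_graph ?R" using jBA' by (rule ej_simple)
    have jCR: "J C z y ?R" using jBA jCA' VA sR unfolding J_def by auto
    have tR: "tree ?R"
    proof -
      have "T = edge_join ?R y z C" using TR ej_sym[of C z y ?R] by simp
      then show ?thesis using side_tree[OF t J_sym[OF jCR]] by simp
    qed
    have iG': "inv_g (edge_join C z y ?R)" using iT TR by simp
    have spG': "s \<in> patterns (edge_join C z y ?R)" using sp TR by simp
    have ssG': "Nmul (edge_join C z y ?R) s = ones (edge_join C z y ?R)" using ss TR by simp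
    show ?thesis
    proof (cases "inv_g ?R")
      case True
      then have "inv_g C \<and> activation C z = 0 \<and> activation ?R y = 1" using case1[OF jCR iG' spG' ssG' sy] by blast
      then show ?thesis using tC tR jCR True TR by blast
    next
      case False
      have iC: "inv_g C" and aCz: "activation C z = 1" and hR: "half_activated ?R y"
        using case2[OF jCR iG' spG' ssG' sy False] by auto
      have sz: "s z = 0" using side[OF jCR iG' spG' ssG' sy] by blast
      have fB: "finite (verts B)" using jBA by (rule J_fin1)
      have fC: "finite (verts C)" using jCR by (rule J_fin1)
      have u: "u \<in> verts B" and yA': "y \<in> verts A'" and dBA': "verts B \<inter> verts A' = {}"
        using jBA' unfolding J_def by auto
      have z: "z \<in> verts C" and dCR: "verts C \<inter> (verts B \<union> verts A') = {}"
        using jCR unfolding J_def by auto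
      have dCB: "verts C \<inter> verts B = {}" and dCA': "verts C \<inter> verts A' = {}" using dCR by auto
      obtain sB where sB: "sB \<in> patterns B" "Nmul B sB = ones B" "sB u = 1"
        using act1_sol[OF fB iB aBu] by blast
      obtain sC where sC: "sC \<in> patterns C" "Nmul C sC = ones C" "sC z = 1"
        using act1_sol[OF fC iC aCz] by blast
      obtain qB where qB: "qB \<in> patterns B" "Nmul B qB = ev u"
        using inv_surj[OF fB iB ev_pat[OF u]] by blast
      obtain qC where qC: "qC \<in> patterns C" "Nmul C qC = ev z"
        using inv_surj[OF fC iC ev_pat[OF z]] by blast
      have qBu: "qB u = 1" using part_diag[OF fB u sB(2), of qB] qB(2) sB(3) by simp
      have qCz: "qC z = 1" using part_diag[OF fC z sC(2), of qC] qC(2) sC(3) by simp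
      have qBy: "qB y = 0" and qBz: "qB z = 0" using pat_out[OF qB(1)] yA' z dBA' dCB by blast+
      have qCy: "qC y = 0" and qCu: "qC u = 0" using pat_out[OF qC(1)] yA' u dCA' dCB by blast+
      have NCqB: "Nmul C qB = (\<lambda>_. 0)" using Nmul_other[OF qB(1)] dCB by blast
      have NA'qB: "Nmul A' qB = (\<lambda>_. 0)" using Nmul_other[OF qB(1) dBA'] .
      have NBqC: "Nmul B qC = (\<lambda>_. 0)" using Nmul_other[OF qC(1) dCB] .
      have NA'qC: "Nmul A' qC = (\<lambda>_. 0)" using Nmul_other[OF qC(1) dCA'] .
      have pB: "p \<in> patterns B \<Longrightarrow> p \<in> patterns (edge_join C z y ?R)" for p by (intro pat_ej2 pat_ej1)
      have pC: "p \<in> patterns C \<Longrightarrow> p \<in> patterns (edge_join C z y ?R)" for p by (intro pat_ej1)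
      have pA': "p \<in> patterns A' \<Longrightarrow> p \<in> patterns (edge_join C z y ?R)" for p by (intro pat_ej2)
      have iA': "inv_g A'"
        unfolding inv_g_def
      proof (intro ballI impI)
        fix l assume lp: "l \<in> patterns A'" and ln: "Nmul A' l = (\<lambda>_. 0)"
        have lu: "l u = 0" and lz: "l z = 0" using pat_out[OF lp] u z dBA' dCA' by blast+
        have NCl: "Nmul C l = (\<lambda>_. 0)" using Nmul_other[OF lp] dCA' by blast
        have NBl: "Nmul B l = (\<lambda>_. 0)" using Nmul_other[OF lp] dBA' by blast
        have ly: "l y = 0"
        proof (rule ccontr)
          assume "l y \<noteq> 0"
          then have ly1: "l y = 1" by simp
          let ?P = "\<lambda>x. qB x + qC x + l x"
          have PG: "?P \<in> patterns (edge_join C z y ?R)"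
            using pat_add[OF pat_add[OF pB[OF qB(1)] pC[OF qC(1)]] pA'[OF lp]] .
          have "Nmul (edge_join C z y ?R) ?P = (\<lambda>_. 0)"
          proof (rule star_null[OF jBA' jCR])
            fix v assume "v \<in> verts C"
            then show "Nmul C ?P v + (if v = z then ?P y else 0) = 0"
              using qC(2) NCqB NCl qBy qCy ly1 by (simp add: Nmul_add ev_def)
          next
            fix v assume "v \<in> verts B"
            then show "Nmul B ?P v + (if v = u then ?P y else 0) = 0"
              using qB(2) NBqC NBl qBy qCy ly1 by (simp add: Nmul_add ev_def)
          next
            fix v assume "v \<in> verts A'"
            then show "Nmul A' ?P v + (if v = y then ?P u + ?P z else 0) = 0"
              using ln NA'qB NA'qC qBu qCu lu qBz qCz lz by (simp add: Nmul_add)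
          qed
          then have "?P u = 0" using inv_zero[OF iG' PG] by blast
          then show False using qBu qCu lu by simp
        qed
        have lG: "l \<in> patterns (edge_join C z y ?R)" using pA'[OF lp] .
        have "Nmul (edge_join C z y ?R) l = (\<lambda>_. 0)"
        proof (rule star_null[OF jBA' jCR])
          fix v assume "v \<in> verts C"
          then show "Nmul C l v + (if v = z then l y else 0) = 0" using NCl ly by simp
        next
          fix v assume "v \<in> verts B"
          then show "Nmul B l v + (if v = u then l y else 0) = 0" using NBl ly by simp
        next
          fix v assume "v \<in> verts A'"
          then show "Nmul A' l v + (if v = y then l u + l z else 0) = 0" using ln lu lz by simp
        qed
        then show "l = (\<lambda>_. 0)" using iG' lG unfolding inv_g_def by blast
      qed
      have solA': "Nmul A' (rs (verts A') s) = ones A'"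
      proof
        fix v show "Nmul A' (rs (verts A') s) v = ones A' v"
        proof (cases "v \<in> verts A'")
          case True
          have "Nmul (edge_join C z y ?R) s v = 1" using ssG' True by (simp add: ones_def)
          then have "Nmul A' s v + (if v = y then s u + s z else 0) = 1"
            using star_rows(3)[OF jBA' jCR True, of s] by simp
          moreover have "(if v = y then s u + s z else 0) = 0" using su sz by simp
          ultimately have "Nmul A' s v = 1" by simp
          then show ?thesis using True by (simp add: Nmul_rs ones_def)
        next
          case False then show ?thesis by (simp add: Nmul_out ones_def)
        qed
      qed
      have aA': "activation A' y = 1"
        using act_inv[OF iA' rs_pat solA'] yA' sy by (simp add: rs_def)
      show ?thesis using tB tA' tC jBA' jCR iB iA' iC aBu aA' aCz hR TR by blast
    qed
  qed
qed



theorem theorem4p7: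
  fixes T :: "'a graph"
  assumes "tree T" and "card (verts T) \<ge> 2"
  defines "C2 \<equiv>
     (\<exists>T1 T2 u w. tree T1 \<and> tree T2 \<and> verts T1 \<inter> verts T2 = {} \<and>
        always_solvable T1 \<and> always_solvable T2 \<and> u \<in> verts T1 \<and> w \<in> verts T2 \<and>
        activation T1 u = 0 \<and> activation T2 w = 1 \<and> T = edge_join T1 u w T2)
   \<or> (\<exists>T1 T2 T3 x y z. tree T1 \<and> tree T2 \<and> tree T3 \<and>
        verts T1 \<inter> verts T2 = {} \<and> verts T1 \<inter> verts T3 = {} \<and> verts T2 \<inter> verts T3 = {} \<and>
        always_solvable T1 \<and> always_solvable T2 \<and> always_solvable T3 \<and>
        x \<in> verts T1 \<and> y \<in> verts T2 \<and> z \<in> verts T3 \<and>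
        activation T1 x = 1 \<and> activation T2 y = 1 \<and> activation T3 z = 1 \<and>
        T = (verts T1 \<union> verts T2 \<union> verts T3,
             edges T1 \<union> edges T2 \<union> edges T3 \<union> {{x, y}, {y, z}}))"
  and "C3 \<equiv>
     (\<exists>T1 T2 u w. tree T1 \<and> tree T2 \<and> verts T1 \<inter> verts T2 = {} \<and>
        always_solvable T1 \<and> always_solvable T2 \<and> u \<in> verts T1 \<and> w \<in> verts T2 \<and>
        activation T1 u = 0 \<and> activation T2 w = 1 \<and> T = edge_join T1 u w T2)
   \<or> (\<exists>T1 T2 T3 a b. tree T1 \<and> tree T2 \<and> tree T3 \<and>
        verts T1 \<inter> verts T2 = {} \<and> verts T1 \<inter> verts T3 = {} \<and> verts T2 \<inter> verts T3 = {} \<and>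
        always_solvable T1 \<and> always_solvable T2 \<and> always_solvable T3 \<and>
        a \<in> verts T1 \<and> b \<in> verts T2 \<and> activation T1 a = 1 \<and> activation T2 b = 1 \<and>
        (let X = edge_join T1 a b T2 in
          \<exists>y x. y \<in> verts T3 \<and> x \<in> verts X \<and> activation T3 y = 1 \<and> activation X x = -1 \<and>
            T = edge_join T3 y x X))"
  shows "(always_solvable T \<longleftrightarrow> C2) \<and> (always_solvable T \<longleftrightarrow> C3)"
proof -
  have fT: "finite (verts T)" using assms(1) by (rule tree_fin)
  have asT: "always_solvable T \<longleftrightarrow> inv_g T" using fT by (rule always_solvable_iff)
  have as_t: "always_solvable G \<longleftrightarrow> inv_g G" if "tree G" for G :: "'a graph"
    using tree_fin[OF that] by (rule always_solvable_iff)
  have first_imp: "inv_g T" if ex: "\<exists>T1 T2 u w. tree T1 \<and> tree T2 \<and> verts T1 \<inter> verts T2 = {} \<and>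
        always_solvable T1 \<and> always_solvable T2 \<and> u \<in> verts T1 \<and> w \<in> verts T2 \<and>
        activation T1 u = 0 \<and> activation T2 w = 1 \<and> T = edge_join T1 u w T2"
  proof -
    obtain T1 T2 u w where h: "tree T1" "tree T2" "verts T1 \<inter> verts T2 = {}"
        "always_solvable T1" "always_solvable T2" "u \<in> verts T1" "w \<in> verts T2"
        "activation T1 u = 0" "activation T2 w = 1" "T = edge_join T1 u w T2"
      using ex by blast
    have j: "J T1 u w T2" unfolding J_def using h tree_simple by blast
    have i1: "inv_g T1" using h(4) as_t[OF h(1)] by simp
    have i2: "inv_g T2" using h(5) as_t[OF h(2)] by simp
    obtain s1 where s1: "s1 \<in> patterns T1" "Nmul T1 s1 = ones T1" "s1 u = 0"
      using act0_sol[OF tree_fin[OF h(1)] i1 h(8)] by blast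
    show ?thesis using glue1[OF j i1 i2 s1(2,3)] h(10) by simp
  qed
  have c2_imp: "inv_g T" if "C2"
  proof -
    from that[unfolded assms(3)] show ?thesis
    proof (elim disjE)
      assume "\<exists>T1 T2 u w. tree T1 \<and> tree T2 \<and> verts T1 \<inter> verts T2 = {} \<and>
        always_solvable T1 \<and> always_solvable T2 \<and> u \<in> verts T1 \<and> w \<in> verts T2 \<and>
        activation T1 u = 0 \<and> activation T2 w = 1 \<and> T = edge_join T1 u w T2"
      then show ?thesis by (rule first_imp)
    next
      assume "\<exists>T1 T2 T3 x y z. tree T1 \<and> tree T2 \<and> tree T3 \<and>
        verts T1 \<inter> verts T2 = {} \<and> verts T1 \<inter> verts T3 = {} \<and> verts T2 \<inter> verts T3 = {} \<and>
        always_solvable T1 \<and> always_solvable T2 \<and> always_solvable T3 \<and>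
        x \<in> verts T1 \<and> y \<in> verts T2 \<and> z \<in> verts T3 \<and>
        activation T1 x = 1 \<and> activation T2 y = 1 \<and> activation T3 z = 1 \<and>
        T = (verts T1 \<union> verts T2 \<union> verts T3,
             edges T1 \<union> edges T2 \<union> edges T3 \<union> {{x, y}, {y, z}})"
      then obtain T1 T2 T3 x y z where h: "tree T1" "tree T2" "tree T3"
        "verts T1 \<inter> verts T2 = {}" "verts T1 \<inter> verts T3 = {}" "verts T2 \<inter> verts T3 = {}"
        "always_solvable T1" "always_solvable T2" "always_solvable T3"
        "x \<in> verts T1" "y \<in> verts T2" "z \<in> verts T3"
        "activation T1 x = 1" "activation T2 y = 1" "activation T3 z = 1"
        "T = (verts T1 \<union> verts T2 \<union> verts T3,
             edges T1 \<union> edges T2 \<union> edges T3 \<union> {{x, y}, {y, z}})"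
        by blast
      have eq: "T = edge_join (edge_join T1 x y T2) y z T3"
        using h(16) unfolding edge_join_def by (simp add: verts_def edges_def Un_ac insert_commute)
      have j1: "J T1 x y T2" unfolding J_def using h tree_simple by blast
      have j2: "J (edge_join T1 x y T2) y z T3"
        unfolding J_def using h tree_simple[OF h(3)] ej_simple[OF j1] by auto
      have i1: "inv_g T1" using h(7) as_t[OF h(1)] by simp
      have i2: "inv_g T2" using h(8) as_t[OF h(2)] by simp
      have i3: "inv_g T3" using h(9) as_t[OF h(3)] by simp
      obtain s1 where s1: "s1 \<in> patterns T1" "Nmul T1 s1 = ones T1" "s1 x = 1"
        using act1_sol[OF tree_fin[OF h(1)] i1 h(13)] by blast
      obtain s3 where s3: "s3 \<in> patterns T3" "Nmul T3 s3 = ones T3" "s3 z = 1"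
        using act1_sol[OF tree_fin[OF h(3)] i3 h(15)] by blast
      show ?thesis using glue2[OF j1 j2 i1 i2 i3 s1(2,3) s3(2,3)] eq by simp
    qed
  qed
  have c3_imp: "inv_g T" if "C3"
  proof -
    from that[unfolded assms(4)] show ?thesis
    proof (elim disjE)
      assume "\<exists>T1 T2 u w. tree T1 \<and> tree T2 \<and> verts T1 \<inter> verts T2 = {} \<and>
        always_solvable T1 \<and> always_solvable T2 \<and> u \<in> verts T1 \<and> w \<in> verts T2 \<and>
        activation T1 u = 0 \<and> activation T2 w = 1 \<and> T = edge_join T1 u w T2"
      then show ?thesis by (rule first_imp)
    next
      assume "\<exists>T1 T2 T3 a b. tree T1 \<and> tree T2 \<and> tree T3 \<and>
        verts T1 \<inter> verts T2 = {} \<and> verts T1 \<inter> verts T3 = {} \<and> verts T2 \<inter> verts T3 = {} \<and>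
        always_solvable T1 \<and> always_solvable T2 \<and> always_solvable T3 \<and>
        a \<in> verts T1 \<and> b \<in> verts T2 \<and> activation T1 a = 1 \<and> activation T2 b = 1 \<and>
        (let X = edge_join T1 a b T2 in
          \<exists>y x. y \<in> verts T3 \<and> x \<in> verts X \<and> activation T3 y = 1 \<and> activation X x = -1 \<and>
            T = edge_join T3 y x X)"
      then obtain T1 T2 T3 a b where h0: "tree T1" "tree T2" "tree T3"
        "verts T1 \<inter> verts T2 = {}" "verts T1 \<inter> verts T3 = {}" "verts T2 \<inter> verts T3 = {}"
        "always_solvable T1" "always_solvable T2" "always_solvable T3"
        "a \<in> verts T1" "b \<in> verts T2" "activation T1 a = 1" "activation T2 b = 1"
        and ex: "let X = edge_join T1 a b T2 in
          \<exists>y x. y \<in> verts T3 \<and> x \<in> verts X \<and> activation T3 y = 1 \<and> activation X x = -1 \<and>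
            T = edge_join T3 y x X"
        by auto
      from ex obtain y x where h1: "y \<in> verts T3" "x \<in> verts (edge_join T1 a b T2)"
        "activation T3 y = 1" "activation (edge_join T1 a b T2) x = -1"
        "T = edge_join T3 y x (edge_join T1 a b T2)"
        unfolding Let_def by auto
      note h = h0(1-11) h1(1-5)
      have j1: "J T1 a b T2" unfolding J_def using h tree_simple by blast
      have j2: "J T3 y x (edge_join T1 a b T2)"
        unfolding J_def using h tree_simple[OF h(3)] ej_simple[OF j1] by auto
      have i1: "inv_g T1" using h(7) as_t[OF h(1)] by simp
      have i2: "inv_g T2" using h(8) as_t[OF h(2)] by simp
      have i3: "inv_g T3" using h(9) as_t[OF h(3)] by simp
      obtain s3 where s3: "s3 \<in> patterns T3" "Nmul T3 s3 = ones T3" "s3 y = 1"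
        using act1_sol[OF tree_fin[OF h(3)] i3 h(14)] by blast
      have hx: "half_activated (edge_join T1 a b T2) x" using h1(4) by (simp add: act_m1_iff)
      show ?thesis using glue3[OF j1 j2 i1 i2 i3 s3(2,3) hx] h1(5) by simp
    qed
  qed
  have fwd: "C2 \<and> C3" if iT: "inv_g T"
  proof -
    from struct[OF assms(1,2) iT] show ?thesis
    proof (elim disjE exE conjE)
      fix T1 T2 u w
      assume h: "tree T1" "tree T2" "J T1 u w T2" "inv_g T1" "inv_g T2" "activation T1 u = 0"
        "activation T2 w = 1" "T = edge_join T1 u w T2"
      have a1: "always_solvable T1" using h(4) as_t[OF h(1)] by simp
      have a2: "always_solvable T2" using h(5) as_t[OF h(2)] by simp
      have d: "verts T1 \<inter> verts T2 = {}" "u \<in> verts T1" "w \<in> verts T2" using h(3) unfolding J_def by auto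
      have "\<exists>T1 T2 u w. tree T1 \<and> tree T2 \<and> verts T1 \<inter> verts T2 = {} \<and>
        always_solvable T1 \<and> always_solvable T2 \<and> u \<in> verts T1 \<and> w \<in> verts T2 \<and>
        activation T1 u = 0 \<and> activation T2 w = 1 \<and> T = edge_join T1 u w T2"
        apply (rule exI[of _ T1], rule exI[of _ T2], rule exI[of _ u], rule exI[of _ w])
        using h a1 a2 d by simp
      then have "C2" "C3" unfolding assms(3,4) by (rule disjI1)+
      then show ?thesis by (rule conjI)
    next
      fix B A' C u y z
      assume h: "tree B" "tree A'" "tree C" "J B u y A'" "J C z y (edge_join B u y A')"
        "inv_g B" "inv_g A'" "inv_g C" "activation B u = 1" "activation A' y = 1"
        "activation C z = 1" "half_activated (edge_join B u y A') y"
        "T = edge_join C z y (edge_join B u y A')"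
      have aB: "always_solvable B" using h(6) as_t[OF h(1)] by simp
      have aA: "always_solvable A'" using h(7) as_t[OF h(2)] by simp
      have aC: "always_solvable C" using h(8) as_t[OF h(3)] by simp
      have d1: "verts B \<inter> verts A' = {}" "u \<in> verts B" "y \<in> verts A'" using h(4) unfolding J_def by auto
      have d2: "verts C \<inter> (verts B \<union> verts A') = {}" "z \<in> verts C" using h(5) unfolding J_def by auto
      have d3: "verts B \<inter> verts C = {}" "verts A' \<inter> verts C = {}" using d2 by auto
      have eqT: "T = (verts B \<union> verts A' \<union> verts C,
             edges B \<union> edges A' \<union> edges C \<union> {{u, y}, {y, z}})"
        using h(13) unfolding edge_join_def by (simp add: verts_def edges_def Un_ac insert_commute)
      have actX: "activation (edge_join B u y A') y = -1" using h(12) by (simp add: act_m1_iff)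
      have yX: "y \<in> verts (edge_join B u y A')" using d1 by simp
      have c2: "\<exists>T1 T2 T3 x y z. tree T1 \<and> tree T2 \<and> tree T3 \<and>
        verts T1 \<inter> verts T2 = {} \<and> verts T1 \<inter> verts T3 = {} \<and> verts T2 \<inter> verts T3 = {} \<and>
        always_solvable T1 \<and> always_solvable T2 \<and> always_solvable T3 \<and>
        x \<in> verts T1 \<and> y \<in> verts T2 \<and> z \<in> verts T3 \<and>
        activation T1 x = 1 \<and> activation T2 y = 1 \<and> activation T3 z = 1 \<and>
        T = (verts T1 \<union> verts T2 \<union> verts T3,
             edges T1 \<union> edges T2 \<union> edges T3 \<union> {{x, y}, {y, z}})"
        apply (rule exI[of _ B], rule exI[of _ A'], rule exI[of _ C])
        apply (rule exI[of _ u], rule exI[of _ y], rule exI[of _ z])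
        using h aB aA aC d1 d2 d3 eqT by simp
      have c3: "\<exists>T1 T2 T3 a b. tree T1 \<and> tree T2 \<and> tree T3 \<and>
        verts T1 \<inter> verts T2 = {} \<and> verts T1 \<inter> verts T3 = {} \<and> verts T2 \<inter> verts T3 = {} \<and>
        always_solvable T1 \<and> always_solvable T2 \<and> always_solvable T3 \<and>
        a \<in> verts T1 \<and> b \<in> verts T2 \<and> activation T1 a = 1 \<and> activation T2 b = 1 \<and>
        (let X = edge_join T1 a b T2 in
          \<exists>y x. y \<in> verts T3 \<and> x \<in> verts X \<and> activation T3 y = 1 \<and> activation X x = -1 \<and>
            T = edge_join T3 y x X)"
      proof -
        have inner: "\<exists>ya x. ya \<in> verts C \<and> x \<in> verts (edge_join B u y A') \<and> activation C ya = 1 \<and>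
            activation (edge_join B u y A') x = -1 \<and> T = edge_join C ya x (edge_join B u y A')"
          apply (rule exI[of _ z], rule exI[of _ y])
          using h d2 actX yX by simp
        show ?thesis
          apply (rule exI[of _ B], rule exI[of _ A'], rule exI[of _ C])
          apply (rule exI[of _ u], rule exI[of _ y])
          unfolding Let_def
          using h aB aA aC d1 d3 inner by simp
      qed
      have "C2" unfolding assms(3) using c2 by (rule disjI2)
      moreover have "C3" unfolding assms(4) using c3 by (rule disjI2)
      ultimately show ?thesis by (rule conjI)
    qed
  qed
  show ?thesis using asT c2_imp c3_imp fwd by blast
qed

end
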